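(* For any two pre-subgroups $f,f'$ of $V$ there exist pre-subgroups $g,g'$ with $H^f\cap H^{f'}=H^g$ and $H_f\cap H_{f'}=H_{g'}$. Consequently the set of pre-subgroups ordered by $\prec$ is a lattice, with $g=\inf(f,f')$ and $g'=\sup(f,f')$.
   Context: Let $\mathcal H$ be a finite-dimensional Hilbert space and $V$ a multiplicative unitary on $\mathcal H$ ($V_{12}V_{13}V_{23}=V_{23}V_{12}$) of multiplicity 1 (one-dimensional space of fixed vectors $\xi$, i.e. $V(\xi\otimes\eta)=\xi\otimes\eta$ for all $\eta$). Fix a unit fixed vector $e$. A pre-subgroup is $f\in\mathcal H$ with $\|f\|=1$, $\langle f,e\rangle>0$, $V(f\otimes f)=f\otimes f$; $H^f=\{\eta:V(f\otimes\eta)=f\otimes\eta\}$, $H_f=\{\eta:V(\eta\otimes f)=\eta\otimes f\}$. The partial order $g\prec f$ on pre-subgroups means $V(f\otimes g)=f\otimes g$, equivalently $H^g\subset H^f$, equivalently $H_f\subset H_g$. *)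

theory Defs
  imports "HOL-Analysis.Analysis"
begin

text \<open>The finite-dimensional Hilbert space H is modelled as complex ^ 'n ('n a finite index
type, i.e. an orthonormal basis), H \<otimes> H as complex ^ ('n \<times> 'n), and
H \<otimes> H \<otimes> H as complex ^ ('n \<times> 'n \<times> 'n).\<close>

definition cinner :: "complex ^ 'n::finite \<Rightarrow> complex ^ 'n \<Rightarrow> complex" where
  "cinner x y = (\<Sum>i\<in>UNIV. x $ i * cnj (y $ i))"

definition tensor :: "complex ^ 'n::finite \<Rightarrow> complex ^ 'n \<Rightarrow> complex ^ ('n \<times> 'n)" where
  "tensor x y = (\<chi> p. x $ fst p * y $ snd p)"

definition adjoint_mat :: "complex ^ 'm::finite ^ 'n::finite \<Rightarrow> complex ^ 'n ^ 'm" where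
  "adjoint_mat A = (\<chi> i j. cnj (A $ j $ i))"

definition unitary_mat :: "complex ^ 'n::finite ^ 'n \<Rightarrow> bool" where
  "unitary_mat U \<longleftrightarrow> U ** adjoint_mat U = mat 1 \<and> adjoint_mat U ** U = mat 1"

text \<open>Leg numbering: V12 = V \<otimes> 1, V23 = 1 \<otimes> V, V13 acting on legs 1 and 3.\<close>

definition leg12 :: "complex ^ ('n::finite \<times> 'n) ^ ('n \<times> 'n) \<Rightarrow> complex ^ ('n \<times> 'n \<times> 'n) ^ ('n \<times> 'n \<times> 'n)" where
  "leg12 V = (\<chi> p q. V $ (fst p, fst (snd p)) $ (fst q, fst (snd q)) * (if snd (snd p) = snd (snd q) then 1 else 0))"

definition leg23 :: "complex ^ ('n::finite \<times> 'n) ^ ('n \<times> 'n) \<Rightarrow> complex ^ ('n \<times> 'n \<times> 'n) ^ ('n \<times> 'n \<times> 'n)" where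
  "leg23 V = (\<chi> p q. (if fst p = fst q then 1 else 0) * V $ snd p $ snd q)"

definition leg13 :: "complex ^ ('n::finite \<times> 'n) ^ ('n \<times> 'n) \<Rightarrow> complex ^ ('n \<times> 'n \<times> 'n) ^ ('n \<times> 'n \<times> 'n)" where
  "leg13 V = (\<chi> p q. V $ (fst p, snd (snd p)) $ (fst q, snd (snd q)) * (if fst (snd p) = fst (snd q) then 1 else 0))"

definition multiplicative_unitary :: "complex ^ ('n::finite \<times> 'n) ^ ('n \<times> 'n) \<Rightarrow> bool" where
  "multiplicative_unitary V \<longleftrightarrow> unitary_mat V \<and>
     leg12 V ** leg13 V ** leg23 V = leg23 V ** leg12 V"

definition fixed_vec :: "complex ^ ('n::finite \<times> 'n) ^ ('n \<times> 'n) \<Rightarrow> complex ^ 'n \<Rightarrow> bool" where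
  "fixed_vec V \<xi> \<longleftrightarrow> (\<forall>\<eta>. V *v tensor \<xi> \<eta> = tensor \<xi> \<eta>)"

definition multiplicity_one :: "complex ^ ('n::finite \<times> 'n) ^ ('n \<times> 'n) \<Rightarrow> bool" where
  "multiplicity_one V \<longleftrightarrow> (\<exists>\<xi>. \<xi> \<noteq> 0 \<and> fixed_vec V \<xi> \<and>
      (\<forall>\<zeta>. fixed_vec V \<zeta> \<longrightarrow> (\<exists>c::complex. \<zeta> = c *s \<xi>)))"

definition pre_subgroup :: "complex ^ ('n::finite \<times> 'n) ^ ('n \<times> 'n) \<Rightarrow> complex ^ 'n \<Rightarrow> complex ^ 'n \<Rightarrow> bool" where
  "pre_subgroup V e f \<longleftrightarrow> norm f = 1 \<and> Im (cinner f e) = 0 \<and> Re (cinner f e) > 0 \<and>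
     V *v tensor f f = tensor f f"

definition Hup :: "complex ^ ('n::finite \<times> 'n) ^ ('n \<times> 'n) \<Rightarrow> complex ^ 'n \<Rightarrow> (complex ^ 'n) set" where
  "Hup V f = {\<eta>. V *v tensor f \<eta> = tensor f \<eta>}"

definition Hlow :: "complex ^ ('n::finite \<times> 'n) ^ ('n \<times> 'n) \<Rightarrow> complex ^ 'n \<Rightarrow> (complex ^ 'n) set" where
  "Hlow V f = {\<eta>. V *v tensor \<eta> f = tensor \<eta> f}"

definition prec :: "complex ^ ('n::finite \<times> 'n) ^ ('n \<times> 'n) \<Rightarrow> complex ^ 'n \<Rightarrow> complex ^ 'n \<Rightarrow> bool" where
  "prec V g f \<longleftrightarrow> V *v tensor f g = tensor f g"

end

theory Submission
  imports Defs
begin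


lemma sum_UNIV_prod: "(\<Sum>p\<in>(UNIV::('a::finite \<times> 'b::finite) set). f p) = (\<Sum>a\<in>UNIV. \<Sum>b\<in>UNIV. f (a,b))"
proof -
  have "(\<Sum>a\<in>UNIV. \<Sum>b\<in>UNIV. f (a,b)) = (\<Sum>(a,b)\<in>UNIV \<times> UNIV. f (a,b))"
    by (rule sum.cartesian_product)
  then show ?thesis by simp
qed

lemma cinner_add_left: "cinner (x + y) z = cinner x z + cinner y z"
  by (simp add: cinner_def distrib_right sum.distrib)
lemma cinner_add_right: "cinner x (y + z) = cinner x y + cinner x z"
  by (simp add: cinner_def distrib_left sum.distrib)
lemma cinner_diff_left: "cinner (x - y) z = cinner x z - cinner y z"
  by (simp add: cinner_def left_diff_distrib sum_subtractf)
lemma cinner_diff_right: "cinner x (y - z) = cinner x y - cinner x z"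
  by (simp add: cinner_def right_diff_distrib sum_subtractf)
lemma cinner_scale_left: "cinner (c *s x) y = c * cinner x y"
  by (simp add: cinner_def sum_distrib_left mult.assoc)
lemma cinner_scale_right: "cinner x (c *s y) = cnj c * cinner x y"
  by (simp add: cinner_def sum_distrib_left mult_ac)
lemma cinner_zero_left[simp]: "cinner 0 y = 0" by (simp add: cinner_def)
lemma cinner_zero_right[simp]: "cinner x 0 = 0" by (simp add: cinner_def)
lemma cinner_sum_left: "cinner (\<Sum>k\<in>S. f k) y = (\<Sum>k\<in>S. cinner (f k) y)"
  by (induction S rule: infinite_finite_induct) (auto simp: cinner_add_left)
lemma cinner_sum_right: "cinner y (\<Sum>k\<in>S. f k) = (\<Sum>k\<in>S. cinner y (f k))"
  by (induction S rule: infinite_finite_induct) (auto simp: cinner_add_right)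
lemma cnj_cinner: "cnj (cinner x y) = cinner y x"
  by (simp add: cinner_def mult.commute)

lemma Re_cinner: "Re (cinner x y) = inner x y"
  by (simp add: cinner_def inner_vec_def inner_complex_def Re_sum)

lemma Im_cinner_self: "Im (cinner x x) = 0"
  by (simp add: cinner_def Im_sum)

lemma cinner_self: "cinner x x = complex_of_real ((norm x)\<^sup>2)"
  by (simp add: complex_eq_iff Re_cinner Im_cinner_self power2_norm_eq_inner)

lemma cinner_self_eq_0: "cinner x x = 0 \<longleftrightarrow> x = 0"
  by (simp add: cinner_self)

lemma norm_sq_Re: "(norm x)\<^sup>2 = Re (cinner x x)"
  by (simp add: Re_cinner power2_norm_eq_inner)

lemma norm_diff_sq: "(norm (x - y))\<^sup>2 = (norm x)\<^sup>2 + (norm y)\<^sup>2 - 2 * Re (cinner x y)"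
  by (simp add: Re_cinner power2_norm_eq_inner inner_diff_left inner_diff_right inner_commute)

lemma norm_scale: "norm (c *s x) = cmod c * norm x"
proof -
  have c1: "c * cnj c = complex_of_real ((cmod c)\<^sup>2)" by (simp add: complex_mult_cnj cmod_power2)
  have "cnj c * (c * cinner x x) = (c * cnj c) * cinner x x" by (simp add: mult_ac)
  also have "\<dots> = complex_of_real ((cmod c)\<^sup>2 * (norm x)\<^sup>2)"
    by (simp only: c1 cinner_self of_real_mult)
  finally have h: "cnj c * (c * cinner x x) = complex_of_real ((cmod c)\<^sup>2 * (norm x)\<^sup>2)" .
  have "(norm (c *s x))\<^sup>2 = (cmod c * norm x)\<^sup>2"
    unfolding norm_sq_Re[of "c *s x"] cinner_scale_left cinner_scale_right h
    by (simp only: Re_complex_of_real power_mult_distrib)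
  then show ?thesis by (simp add: power2_eq_iff_nonneg)
qed

lemma cauchy_schwarz_c: "cmod (cinner x y) \<le> norm x * norm y"
proof (cases "cinner x y = 0")
  case True then show ?thesis by simp
next
  case False
  define a where "a = cinner x y"
  have "cinner x (a *s y) = cnj a * a" by (simp add: cinner_scale_right a_def)
  also have "\<dots> = complex_of_real ((cmod a)\<^sup>2)" by (simp add: complex_mult_cnj cmod_power2 mult.commute)
  finally have h1: "(cmod a)\<^sup>2 = inner x (a *s y)" by (metis Re_cinner Re_complex_of_real)
  have h2: "inner x (a *s y) \<le> norm x * norm (a *s y)" by (rule real_inner_class.Cauchy_Schwarz_ineq2[THEN order_trans[OF abs_ge_self]])
  have h3: "norm (a *s y) = cmod a * norm y" by (rule norm_scale)
  have "cmod a * cmod a \<le> cmod a * (norm x * norm y)" using h1 h2 h3 by (simp add: power2_eq_square mult_ac)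
  moreover have "cmod a > 0" using False a_def by simp
  ultimately show ?thesis unfolding a_def[symmetric] using mult_le_cancel_left_pos by blast
qed



lemma mv_add: "M *v (x + y) = M *v x + M *v y"
  by (rule matrix_vector_right_distrib)
lemma mv_scale: "(M::complex^'m::finite^'k::finite) *v (c *s x) = c *s (M *v x)"
  by (simp add: vec_eq_iff matrix_vector_mult_def sum_distrib_left mult_ac)
lemma mv_diff: "(M::complex^'m::finite^'k::finite) *v (x - y) = M *v x - M *v y"
  by (simp add: vec_eq_iff matrix_vector_mult_def right_diff_distrib sum_subtractf)
lemma mv_zero[simp]: "(M::complex^'m::finite^'k::finite) *v 0 = 0"
  by (simp add: vec_eq_iff matrix_vector_mult_def)
lemma mv_sum: "(M::complex^'m::finite^'k::finite) *v (\<Sum>k\<in>S. f k) = (\<Sum>k\<in>S. M *v f k)"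
  by (induction S rule: infinite_finite_induct) (auto simp: mv_add)
lemma scaleR_vs: "r *\<^sub>R (x::complex^'n::finite) = complex_of_real r *s x"
  by (simp add: vec_eq_iff) (simp add: scaleR_conv_of_real)
lemma vs_add: "c *s (x + y) = c *s x + (c::complex) *s (y::complex^'n::finite)"
  by (simp add: vec_eq_iff distrib_left)
lemma vs_mult: "c *s (d *s x) = (c * d) *s (x::complex^'n::finite)"
  by (simp add: vec_eq_iff mult.assoc)
lemma vs_one[simp]: "(1::complex) *s x = x"
  by (simp add: vec_eq_iff)
lemma vs_zero[simp]: "(c::complex) *s 0 = 0" "(0::complex) *s x = 0"
  by (simp_all add: vec_eq_iff)

lemma tensor_add_left: "tensor (x + y) z = tensor x z + tensor y z"
  by (simp add: vec_eq_iff tensor_def distrib_right)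
lemma tensor_add_right: "tensor x (y + z) = tensor x y + tensor x z"
  by (simp add: vec_eq_iff tensor_def distrib_left)
lemma tensor_scale_left: "tensor (c *s x) z = c *s tensor x z"
  by (simp add: vec_eq_iff tensor_def mult.assoc)
lemma tensor_scale_right: "tensor x (c *s z) = c *s tensor x z"
  by (simp add: vec_eq_iff tensor_def mult_ac)
lemma tensor_diff_left: "tensor (x - y) z = tensor x z - tensor y z"
  by (simp add: vec_eq_iff tensor_def left_diff_distrib)
lemma tensor_zero[simp]: "tensor 0 z = 0" "tensor x 0 = 0"
  by (simp_all add: vec_eq_iff tensor_def)
lemma tensor_sum_left: "tensor (\<Sum>k\<in>S. f k) z = (\<Sum>k\<in>S. tensor (f k) z)"
  by (induction S rule: infinite_finite_induct) (auto simp: tensor_add_left)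
lemma tensor_sum_right: "tensor z (\<Sum>k\<in>S. f k) = (\<Sum>k\<in>S. tensor z (f k))"
  by (induction S rule: infinite_finite_induct) (auto simp: tensor_add_right)

lemma cinner_tensor: "cinner (tensor a b) (tensor c d) = cinner a c * cinner b d"
  by (simp add: cinner_def tensor_def sum_UNIV_prod sum_product mult_ac)

lemma norm_tensor: "norm (tensor a b) = norm a * norm b"
proof -
  have "(norm (tensor a b))\<^sup>2 = Re (cinner (tensor a b) (tensor a b))" by (rule norm_sq_Re)
  also have "\<dots> = Re (cinner a a * cinner b b)" by (simp only: cinner_tensor)
  also have "\<dots> = (norm a * norm b)\<^sup>2" by (simp only: cinner_self of_real_mult[symmetric] Re_complex_of_real power_mult_distrib)
  finally have "(norm (tensor a b))\<^sup>2 = (norm a * norm b)\<^sup>2" .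
  then show ?thesis by (simp add: power2_eq_iff_nonneg)
qed

lemma tensor_cancel_left:
  assumes "x \<noteq> 0" "tensor x y = tensor x z" shows "y = z"
proof -
  obtain i where i: "x $ i \<noteq> 0" using assms(1) by (auto simp: vec_eq_iff)
  have "\<And>j. x $ i * y $ j = x $ i * z $ j"
    using assms(2) by (auto simp: vec_eq_iff tensor_def dest: spec[of _ "(i, _)"])
  then show ?thesis using i by (simp add: vec_eq_iff)
qed

lemma tensor_cancel_right:
  assumes "z \<noteq> 0" "tensor x z = tensor y z" shows "x = y"
proof -
  obtain i where i: "z $ i \<noteq> 0" using assms(1) by (auto simp: vec_eq_iff)
  have "\<And>j. x $ j * z $ i = y $ j * z $ i"
    using assms(2) by (auto simp: vec_eq_iff tensor_def dest: spec[of _ "(_, i)"])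
  then show ?thesis using i by (simp add: vec_eq_iff)
qed

lemma cinner_adjoint: "cinner (A *v x) y = cinner x (adjoint_mat A *v y)"
proof -
  have "cinner (A *v x) y = (\<Sum>i\<in>UNIV. \<Sum>j\<in>UNIV. A $ i $ j * x $ j * cnj (y $ i))"
    unfolding cinner_def matrix_vector_mult_def by (simp add: sum_distrib_right)
  also have "\<dots> = (\<Sum>j\<in>UNIV. \<Sum>i\<in>UNIV. A $ i $ j * x $ j * cnj (y $ i))"
    by (rule sum.swap)
  also have "\<dots> = cinner x (adjoint_mat A *v y)"
    unfolding cinner_def matrix_vector_mult_def adjoint_mat_def by (simp add: sum_distrib_left mult_ac)
  finally show ?thesis .
qed

lemma adjoint_adjoint[simp]: "adjoint_mat (adjoint_mat A) = A"
  by (simp add: adjoint_mat_def vec_eq_iff)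

lemma unitary_adjoint: "unitary_mat U \<Longrightarrow> unitary_mat (adjoint_mat U)"
  by (simp add: unitary_mat_def)

lemma unitary_left: "unitary_mat U \<Longrightarrow> adjoint_mat U *v (U *v x) = x"
  by (simp add: unitary_mat_def matrix_vector_mul_assoc)
lemma unitary_right: "unitary_mat U \<Longrightarrow> U *v (adjoint_mat U *v x) = x"
  by (simp add: unitary_mat_def matrix_vector_mul_assoc)

lemma unitary_cinner: "unitary_mat U \<Longrightarrow> cinner (U *v x) (U *v y) = cinner x y"
  by (simp add: cinner_adjoint unitary_left)

lemma unitary_norm: "unitary_mat U \<Longrightarrow> norm (U *v x) = norm x"
proof -
  assume "unitary_mat U"
  then have "Re (cinner (U *v x) (U *v x)) = Re (cinner x x)" by (simp add: unitary_cinner)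
  then have "(norm (U *v x))\<^sup>2 = (norm x)\<^sup>2" by (simp only: norm_sq_Re)
  then show ?thesis by (simp add: power2_eq_iff_nonneg)
qed

lemma unitary_fix_adj: "unitary_mat U \<Longrightarrow> U *v x = x \<Longrightarrow> adjoint_mat U *v x = x"
  by (metis unitary_left)
lemma unitary_inj: "unitary_mat U \<Longrightarrow> U *v x = U *v y \<Longrightarrow> x = y"
  by (metis unitary_left)

lemma basis_expand: "(\<Sum>k\<in>UNIV. (x $ k) *s axis k (1::complex)) = (x::complex^'n::finite)"
  by (simp add: vec_eq_iff sum_component axis_def if_distrib cong: if_cong)

lemma cinner_axis_right: "cinner x (axis k 1) = x $ k"
  by (simp add: cinner_def axis_def if_distrib cong: if_cong)
lemma cinner_axis_left: "cinner (axis k 1) x = cnj (x $ k)"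
  by (metis cinner_axis_right cnj_cinner)



lemma sum3: "(\<Sum>p\<in>(UNIV::('a::finite \<times> 'b::finite \<times> 'c::finite) set). f p) = (\<Sum>a\<in>UNIV. \<Sum>b\<in>UNIV. \<Sum>c\<in>UNIV. f (a,b,c))"
  by (simp add: sum_UNIV_prod)

lemma mult_if0_left: "(if P then x else 0) * y = (if P then x * y else (0::complex))" by simp
lemma mult_if0_right: "y * (if P then x else 0) = (if P then y * x else (0::complex))" by simp
lemma sum_if_out: "(\<Sum>x\<in>A. if P then f x else 0) = (if P then (\<Sum>x\<in>A. f x) else (0::complex))" by simp
lemmas ifsimps = mult_if0_left mult_if0_right sum_if_out

definition t12 :: "complex^('n::finite \<times> 'n) \<Rightarrow> complex^'n \<Rightarrow> complex^('n \<times> 'n \<times> 'n)" where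
  "t12 W z = (\<chi> p. W $ (fst p, fst (snd p)) * z $ snd (snd p))"
definition t23 :: "complex^'n::finite \<Rightarrow> complex^('n \<times> 'n) \<Rightarrow> complex^('n \<times> 'n \<times> 'n)" where
  "t23 x W = (\<chi> p. x $ fst p * W $ snd p)"
definition t13 :: "complex^('n::finite \<times> 'n) \<Rightarrow> complex^'n \<Rightarrow> complex^('n \<times> 'n \<times> 'n)" where
  "t13 W y = (\<chi> p. W $ (fst p, snd (snd p)) * y $ fst (snd p))"
definition rowv :: "complex^('n::finite \<times> 'n) \<Rightarrow> 'n \<Rightarrow> complex^'n" where
  "rowv W i = (\<chi> j. W $ (i, j))"
definition colv :: "complex^('n::finite \<times> 'n) \<Rightarrow> 'n \<Rightarrow> complex^'n" where
  "colv W k = (\<chi> j. W $ (j, k))"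

lemma leg12_t12: "leg12 V *v t12 W z = t12 (V *v W) z"
  unfolding vec_eq_iff
proof
  fix p :: "'a \<times> 'a \<times> 'a"
  obtain a b c where p: "p = (a,b,c)" by (cases p) auto
  show "(leg12 V *v t12 W z) $ p = t12 (V *v W) z $ p"
    unfolding p matrix_vector_mult_def leg12_def t12_def
    by (simp add: sum_UNIV_prod sum_distrib_left sum_distrib_right ifsimps mult_ac)
qed


lemma leg23_t23: "leg23 V *v t23 x W = t23 x (V *v W)"
  unfolding vec_eq_iff
proof
  fix p :: "'a \<times> 'a \<times> 'a"
  obtain a b c where p: "p = (a,b,c)" by (cases p) auto
  show "(leg23 V *v t23 x W) $ p = t23 x (V *v W) $ p"
    unfolding p matrix_vector_mult_def leg23_def t23_def by (simp add: sum_UNIV_prod sum_distrib_left sum_distrib_right ifsimps mult_ac)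
qed

lemma leg13_t13: "leg13 V *v t13 W y = t13 (V *v W) y"
  unfolding vec_eq_iff
proof
  fix p :: "'a \<times> 'a \<times> 'a"
  obtain a b c where p: "p = (a,b,c)" by (cases p) auto
  show "(leg13 V *v t13 W y) $ p = t13 (V *v W) y $ p"
    unfolding p matrix_vector_mult_def leg13_def t13_def by (simp add: sum_UNIV_prod sum_distrib_left sum_distrib_right ifsimps mult_ac)
qed

lemma leg23_t12: "(leg23 V *v t12 W z) $ (a,b,c) = (V *v tensor (rowv W a) z) $ (b,c)"
  unfolding matrix_vector_mult_def leg23_def t12_def tensor_def rowv_def by (simp add: sum_UNIV_prod sum_distrib_left sum_distrib_right ifsimps mult_ac)

lemma t12_comp: "t12 W z $ (a,b,c) = tensor (rowv W a) z $ (b,c)"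
  unfolding t12_def tensor_def rowv_def by simp

lemma leg12_t23: "(leg12 V *v t23 x W) $ (a,b,c) = (V *v tensor x (colv W c)) $ (a,b)"
  unfolding matrix_vector_mult_def leg12_def t23_def tensor_def colv_def by (simp add: sum_UNIV_prod sum_distrib_left sum_distrib_right ifsimps mult_ac)

lemma t23_comp: "t23 x W $ (a,b,c) = tensor x (colv W c) $ (a,b)"
  unfolding t23_def tensor_def colv_def by simp

lemma leg13_t23: "(leg13 V *v t23 x W) $ (a,b,c) = (V *v tensor x (rowv W b)) $ (a,c)"
  unfolding matrix_vector_mult_def leg13_def t23_def tensor_def rowv_def by (simp add: sum_UNIV_prod sum_distrib_left sum_distrib_right ifsimps mult_ac)

lemma t12_tensor: "t12 (tensor x y) z = t23 x (tensor y z)"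
  by (simp add: vec_eq_iff t12_def t23_def tensor_def mult_ac)
lemma t13_tensor: "t13 (tensor x z) y = t23 x (tensor y z)"
  by (simp add: vec_eq_iff t13_def t23_def tensor_def mult_ac)

lemma t13_cancel:
  assumes "y \<noteq> 0" "t13 W y = t13 W' y" shows "W = W'"
proof -
  obtain i where i: "y $ i \<noteq> 0" using assms(1) by (auto simp: vec_eq_iff)
  have "\<And>a c. W $ (a,c) * y $ i = W' $ (a,c) * y $ i"
    using assms(2) by (auto simp: vec_eq_iff t13_def dest: spec[of _ "(_, i, _)"])
  then show ?thesis using i by (simp add: vec_eq_iff)
qed

lemma cinner_t23: "cinner (t23 x W) (t23 y W') = cinner x y * cinner W W'"
proof -
  have "cinner (t23 x W) (t23 y W') = (\<Sum>a\<in>UNIV. \<Sum>q\<in>UNIV. (x $ a * cnj (y $ a)) * (W $ q * cnj (W' $ q)))"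
    unfolding cinner_def t23_def by (simp add: sum_UNIV_prod[where 'a='a and 'b="'a\<times>'a"] mult_ac)
  also have "\<dots> = cinner x y * cinner W W'" unfolding cinner_def by (simp add: sum_product)
  finally show ?thesis .
qed

lemma leg12_mult: "leg12 A ** leg12 B = leg12 (A ** B)"
  unfolding vec_eq_iff
proof (intro allI)
  fix p q :: "'a \<times> 'a \<times> 'a"
  obtain a b c where p: "p = (a,b,c)" by (cases p) auto
  obtain a' b' c' where q: "q = (a',b',c')" by (cases q) auto
  show "(leg12 A ** leg12 B) $ p $ q = leg12 (A ** B) $ p $ q"
    unfolding p q matrix_matrix_mult_def leg12_def by (simp add: sum_UNIV_prod sum_distrib_left sum_distrib_right ifsimps mult_ac)
qed

lemma leg23_mult: "leg23 A ** leg23 B = leg23 (A ** B)"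
  unfolding vec_eq_iff
proof (intro allI)
  fix p q :: "'a \<times> 'a \<times> 'a"
  obtain a b c where p: "p = (a,b,c)" by (cases p) auto
  obtain a' b' c' where q: "q = (a',b',c')" by (cases q) auto
  show "(leg23 A ** leg23 B) $ p $ q = leg23 (A ** B) $ p $ q"
    unfolding p q matrix_matrix_mult_def leg23_def by (simp add: sum_UNIV_prod sum_distrib_left sum_distrib_right ifsimps mult_ac)
qed

lemma leg12_one: "leg12 (mat 1) = mat 1"
  by (auto simp: vec_eq_iff leg12_def mat_def prod_eq_iff)
lemma leg23_one: "leg23 (mat 1) = mat 1"
  by (auto simp: vec_eq_iff leg23_def mat_def prod_eq_iff)
lemma leg12_adj: "adjoint_mat (leg12 A) = leg12 (adjoint_mat A)"
  by (auto simp: vec_eq_iff leg12_def adjoint_mat_def)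
lemma leg23_adj: "adjoint_mat (leg23 A) = leg23 (adjoint_mat A)"
  by (auto simp: vec_eq_iff leg23_def adjoint_mat_def)

lemma unitary_leg12: "unitary_mat V \<Longrightarrow> unitary_mat (leg12 V)"
  by (simp add: unitary_mat_def leg12_adj leg12_mult leg12_one)
lemma unitary_leg23: "unitary_mat V \<Longrightarrow> unitary_mat (leg23 V)"
  by (simp add: unitary_mat_def leg23_adj leg23_mult leg23_one)



definition Rel :: "complex ^ ('n::finite \<times> 'n) ^ ('n \<times> 'n) \<Rightarrow> complex^'n \<Rightarrow> complex^'n \<Rightarrow> bool" where
  "Rel V x y \<longleftrightarrow> V *v tensor x y = tensor x y"

lemma pent_vec:
  assumes "multiplicative_unitary V"
  shows "leg12 V *v (leg13 V *v (leg23 V *v X)) = leg23 V *v (leg12 V *v X)"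
proof -
  have P: "leg12 V ** leg13 V ** leg23 V = leg23 V ** leg12 V"
    using assms by (simp add: multiplicative_unitary_def)
  have "leg12 V *v (leg13 V *v (leg23 V *v X)) = (leg12 V ** leg13 V ** leg23 V) *v X"
    by (simp only: matrix_vector_mul_assoc matrix_mul_assoc)
  also have "\<dots> = (leg23 V ** leg12 V) *v X" by (simp only: P)
  also have "\<dots> = leg23 V *v (leg12 V *v X)" by (simp only: matrix_vector_mul_assoc)
  finally show ?thesis .
qed

lemma mu_unitary: "multiplicative_unitary V \<Longrightarrow> unitary_mat V"
  by (simp add: multiplicative_unitary_def)

lemma Rel_trans:
  assumes mu: "multiplicative_unitary V" and xy: "Rel V x y" and yz: "Rel V y z" and y0: "y \<noteq> 0"
  shows "Rel V x z"
proof -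
  define X where "X = t23 x (tensor y z)"
  have X12: "X = t12 (tensor x y) z" by (simp add: X_def t12_tensor)
  have X13: "X = t13 (tensor x z) y" by (simp add: X_def t13_tensor)
  have h23: "leg23 V *v X = X" using yz by (simp add: X_def leg23_t23 Rel_def)
  have h12: "leg12 V *v X = X" using xy by (simp add: X12 leg12_t12 Rel_def)
  have "leg12 V *v (leg13 V *v X) = leg12 V *v X"
    using pent_vec[OF mu, of X] h23 h12 by simp
  then have "leg13 V *v X = X"
    using unitary_inj[OF unitary_leg12[OF mu_unitary[OF mu]]] by blast
  then have "t13 (V *v tensor x z) y = t13 (tensor x z) y" by (simp add: X13 leg13_t13)
  then show ?thesis using t13_cancel[OF y0] by (simp add: Rel_def)
qed

lemma Rel_rows:
  assumes mu: "multiplicative_unitary V" and fe: "Rel V f \<eta>" and xe: "Rel V x \<eta>"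
  shows "Rel V (rowv (V *v tensor f x) i) \<eta>"
proof -
  define W where "W = V *v tensor f x"
  define X where "X = t23 f (tensor x \<eta>)"
  have X12: "X = t12 (tensor f x) \<eta>" by (simp add: X_def t12_tensor)
  have X13: "X = t13 (tensor f \<eta>) x" by (simp add: X_def t13_tensor)
  have h23: "leg23 V *v X = X" using xe by (simp add: X_def leg23_t23 Rel_def)
  have h13: "leg13 V *v X = X" using fe by (simp add: X13 leg13_t13 Rel_def)
  have h12: "leg12 V *v X = t12 W \<eta>" by (simp add: X12 leg12_t12 W_def)
  have E: "leg23 V *v t12 W \<eta> = t12 W \<eta>"
    using pent_vec[OF mu, of X] h23 h13 h12 by simp
  have "\<And>b c. (V *v tensor (rowv W i) \<eta>) $ (b,c) = tensor (rowv W i) \<eta> $ (b,c)"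
  proof -
    fix b c
    have "(leg23 V *v t12 W \<eta>) $ (i,b,c) = t12 W \<eta> $ (i,b,c)" by (simp only: E)
    then show "(V *v tensor (rowv W i) \<eta>) $ (b,c) = tensor (rowv W i) \<eta> $ (b,c)"
      by (simp only: leg23_t12 t12_comp)
  qed
  then show ?thesis unfolding Rel_def W_def[symmetric] by (simp add: vec_eq_iff)
qed

lemma Rel_cols:
  assumes mu: "multiplicative_unitary V" and ex: "Rel V \<eta> x" and ef: "Rel V \<eta> f"
  shows "Rel V \<eta> (colv (adjoint_mat V *v tensor x f) k)"
proof -
  have U: "unitary_mat V" using mu by (rule mu_unitary)
  define W where "W = adjoint_mat V *v tensor x f"
  define Y where "Y = t23 \<eta> W"
  define X where "X = t23 \<eta> (tensor x f)"
  have X12: "X = t12 (tensor \<eta> x) f" by (simp add: X_def t12_tensor)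
  have X13: "X = t13 (tensor \<eta> f) x" by (simp add: X_def t13_tensor)
  have hY: "leg23 V *v Y = X" by (simp add: Y_def X_def leg23_t23 W_def unitary_right[OF U])
  have h13: "leg13 V *v X = X" using ef by (simp add: X13 leg13_t13 Rel_def)
  have h12: "leg12 V *v X = X" using ex by (simp add: X12 leg12_t12 Rel_def)
  have "leg23 V *v (leg12 V *v Y) = leg23 V *v Y"
    using pent_vec[OF mu, of Y] hY h13 h12 by simp
  then have E: "leg12 V *v Y = Y"
    using unitary_inj[OF unitary_leg23[OF U]] by blast
  have "\<And>a b. (V *v tensor \<eta> (colv W k)) $ (a,b) = tensor \<eta> (colv W k) $ (a,b)"
  proof -
    fix a b
    have "(leg12 V *v t23 \<eta> W) $ (a,b,k) = t23 \<eta> W $ (a,b,k)" using E by (simp only: Y_def)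
    then show "(V *v tensor \<eta> (colv W k)) $ (a,b) = tensor \<eta> (colv W k) $ (a,b)"
      by (simp only: leg12_t23 t23_comp)
  qed
  then show ?thesis unfolding Rel_def W_def[symmetric] by (simp add: vec_eq_iff)
qed

lemma Rel_lin_left:
  assumes "\<And>i. i \<in> S \<Longrightarrow> Rel V (u i) \<eta>"
  shows "Rel V (\<Sum>i\<in>S. c i *s u i) \<eta>"
  using assms unfolding Rel_def
  by (simp add: tensor_sum_left tensor_scale_left mv_sum mv_scale)

lemma Rel_lin_right:
  assumes "\<And>i. i \<in> S \<Longrightarrow> Rel V \<eta> (u i)"
  shows "Rel V \<eta> (\<Sum>i\<in>S. c i *s u i)"
  using assms unfolding Rel_def
  by (simp add: tensor_sum_right tensor_scale_right mv_sum mv_scale)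

lemma Rel_scale_left: "Rel V x \<eta> \<Longrightarrow> Rel V (c *s x) \<eta>"
  by (simp add: Rel_def tensor_scale_left mv_scale)
lemma Rel_scale_right: "Rel V \<eta> x \<Longrightarrow> Rel V \<eta> (c *s x)"
  by (simp add: Rel_def tensor_scale_right mv_scale)
lemma Rel_add_left: "Rel V x \<eta> \<Longrightarrow> Rel V y \<eta> \<Longrightarrow> Rel V (x + y) \<eta>"
  by (simp add: Rel_def tensor_add_left mv_add)
lemma Rel_add_right: "Rel V \<eta> x \<Longrightarrow> Rel V \<eta> y \<Longrightarrow> Rel V \<eta> (x + y)"
  by (simp add: Rel_def tensor_add_right mv_add)



definition sl1 :: "complex ^ ('n::finite \<times> 'n) ^ ('n \<times> 'n) \<Rightarrow> complex^'n \<Rightarrow> complex^'n \<Rightarrow> complex^'n" where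
  "sl1 U f x = (\<chi> j. \<Sum>i\<in>UNIV. cnj (f $ i) * (U *v tensor f x) $ (i, j))"
definition sl2 :: "complex ^ ('n::finite \<times> 'n) ^ ('n \<times> 'n) \<Rightarrow> complex^'n \<Rightarrow> complex^'n \<Rightarrow> complex^'n" where
  "sl2 U f x = (\<chi> i. \<Sum>j\<in>UNIV. cnj (f $ j) * (U *v tensor x f) $ (i, j))"

lemma sl1_rows: "sl1 U f x = (\<Sum>i\<in>UNIV. cnj (f $ i) *s rowv (U *v tensor f x) i)"
  by (simp add: vec_eq_iff sl1_def rowv_def sum_component)
lemma sl2_cols: "sl2 U f x = (\<Sum>j\<in>UNIV. cnj (f $ j) *s colv (U *v tensor x f) j)"
  by (simp add: vec_eq_iff sl2_def colv_def sum_component)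

lemma cinner_slice1: "cinner (\<chi> j. \<Sum>i\<in>UNIV. cnj (f $ i) * W $ (i, j)) z = cinner W (tensor f z)"
proof -
  have "cinner (\<chi> j. \<Sum>i\<in>UNIV. cnj (f $ i) * W $ (i, j)) z
      = (\<Sum>j\<in>UNIV. \<Sum>i\<in>UNIV. W $ (i, j) * (cnj (f $ i) * cnj (z $ j)))"
    unfolding cinner_def by (simp add: sum_distrib_right sum_distrib_left mult_ac)
  also have "\<dots> = (\<Sum>i\<in>UNIV. \<Sum>j\<in>UNIV. W $ (i, j) * (cnj (f $ i) * cnj (z $ j)))"
    by (rule sum.swap)
  also have "\<dots> = cinner W (tensor f z)"
    unfolding cinner_def tensor_def by (simp add: sum_UNIV_prod)
  finally show ?thesis .
qed

lemma cinner_slice2: "cinner (\<chi> i. \<Sum>j\<in>UNIV. cnj (f $ j) * W $ (i, j)) z = cinner W (tensor z f)"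
  unfolding cinner_def tensor_def by (simp add: sum_UNIV_prod sum_distrib_right sum_distrib_left mult_ac)

lemma cinner_sl1: "cinner (sl1 U f x) z = cinner (U *v tensor f x) (tensor f z)"
  unfolding sl1_def by (rule cinner_slice1)
lemma cinner_sl2: "cinner (sl2 U f x) z = cinner (U *v tensor x f) (tensor z f)"
  unfolding sl2_def by (rule cinner_slice2)

lemma ext_cinner: "(\<And>z. cinner u z = cinner v z) \<Longrightarrow> u = v"
proof -
  assume h: "\<And>z. cinner u z = cinner v z"
  have "cinner (u - v) (u - v) = 0" using h[of "u - v"] by (simp add: cinner_diff_left)
  then show "u = v" by (simp add: cinner_self_eq_0)
qed

lemma sl1_add: "sl1 U f (x + y) = sl1 U f x + sl1 U f y"
  by (rule ext_cinner) (simp add: cinner_sl1 cinner_add_left tensor_add_right mv_add)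
lemma sl1_scale: "sl1 U f (c *s x) = c *s sl1 U f x"
  by (rule ext_cinner) (simp add: cinner_sl1 cinner_scale_left tensor_scale_right mv_scale)
lemma sl1_sum: "sl1 U f (\<Sum>i\<in>S. g i) = (\<Sum>i\<in>S. sl1 U f (g i))"
  by (rule ext_cinner) (simp add: cinner_sl1 cinner_sum_left tensor_sum_right mv_sum)
lemma sl2_add: "sl2 U f (x + y) = sl2 U f x + sl2 U f y"
  by (rule ext_cinner) (simp add: cinner_sl2 cinner_add_left tensor_add_left mv_add)
lemma sl2_scale: "sl2 U f (c *s x) = c *s sl2 U f x"
  by (rule ext_cinner) (simp add: cinner_sl2 cinner_scale_left tensor_scale_left mv_scale)
lemma sl2_sum: "sl2 U f (\<Sum>i\<in>S. g i) = (\<Sum>i\<in>S. sl2 U f (g i))"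
  by (rule ext_cinner) (simp add: cinner_sl2 cinner_sum_left tensor_sum_left mv_sum)

lemma norm_le_from_sq:
  assumes "(norm s)\<^sup>2 \<le> norm x * norm s" shows "norm s \<le> norm (x::'a::real_normed_vector)"
proof (cases "norm s = 0")
  case True then show ?thesis by simp
next
  case False
  then have "norm s > 0" by simp
  with assms show ?thesis by (simp add: power2_eq_square mult_le_cancel_right_pos)
qed

lemma sl1_contract:
  assumes U: "unitary_mat U" and f: "norm f = 1"
  shows "norm (sl1 U f x) \<le> norm x"
proof -
  let ?s = "sl1 U f x"
  have "(norm ?s)\<^sup>2 = Re (cinner (U *v tensor f x) (tensor f ?s))"
    by (simp only: norm_sq_Re cinner_sl1)
  also have "\<dots> \<le> cmod (cinner (U *v tensor f x) (tensor f ?s))" by (rule complex_Re_le_cmod)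
  also have "\<dots> \<le> norm (U *v tensor f x) * norm (tensor f ?s)" by (rule cauchy_schwarz_c)
  also have "\<dots> = norm x * norm ?s" using U f by (simp add: unitary_norm norm_tensor)
  finally show ?thesis by (rule norm_le_from_sq)
qed

lemma sl2_contract:
  assumes U: "unitary_mat U" and f: "norm f = 1"
  shows "norm (sl2 U f x) \<le> norm x"
proof -
  let ?s = "sl2 U f x"
  have "(norm ?s)\<^sup>2 = Re (cinner (U *v tensor x f) (tensor ?s f))"
    by (simp only: norm_sq_Re cinner_sl2)
  also have "\<dots> \<le> cmod (cinner (U *v tensor x f) (tensor ?s f))" by (rule complex_Re_le_cmod)
  also have "\<dots> \<le> norm (U *v tensor x f) * norm (tensor ?s f)" by (rule cauchy_schwarz_c)
  also have "\<dots> = norm x * norm ?s" using U f by (simp add: unitary_norm norm_tensor)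
  finally show ?thesis by (rule norm_le_from_sq)
qed

lemma eq_from_inner:
  assumes "norm u = norm v" "Re (cinner u v) = (norm v)\<^sup>2" shows "u = v"
proof -
  have "(norm (u - v))\<^sup>2 = 0" using assms by (simp add: norm_diff_sq)
  then show ?thesis by simp
qed

lemma sl1_fix:
  assumes U: "unitary_mat U" and f: "norm f = 1" and fx: "sl1 U f x = x"
  shows "U *v tensor f x = tensor f x"
proof (rule eq_from_inner)
  show "norm (U *v tensor f x) = norm (tensor f x)" using U by (simp add: unitary_norm)
  have "cinner (U *v tensor f x) (tensor f x) = cinner x x" using cinner_sl1[of U f x x] fx by simp
  then show "Re (cinner (U *v tensor f x) (tensor f x)) = (norm (tensor f x))\<^sup>2"
    using f by (simp add: norm_tensor norm_sq_Re)
qed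

lemma sl2_fix:
  assumes U: "unitary_mat U" and f: "norm f = 1" and fx: "sl2 U f x = x"
  shows "U *v tensor x f = tensor x f"
proof (rule eq_from_inner)
  show "norm (U *v tensor x f) = norm (tensor x f)" using U by (simp add: unitary_norm)
  have "cinner (U *v tensor x f) (tensor x f) = cinner x x" using cinner_sl2[of U f x x] fx by simp
  then show "Re (cinner (U *v tensor x f) (tensor x f)) = (norm (tensor x f))\<^sup>2"
    using f by (simp add: norm_tensor norm_sq_Re)
qed

lemma sl1_of_fix:
  assumes f: "norm f = 1" and h: "U *v tensor f x = tensor f x"
  shows "sl1 U f x = x"
proof (rule ext_cinner)
  fix z
  have "cinner f f = 1" using f by (simp add: cinner_self)
  then show "cinner (sl1 U f x) z = cinner x z" by (simp add: cinner_sl1 h cinner_tensor)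
qed

lemma sl2_of_fix:
  assumes f: "norm f = 1" and h: "U *v tensor x f = tensor x f"
  shows "sl2 U f x = x"
proof (rule ext_cinner)
  fix z
  have "cinner f f = 1" using f by (simp add: cinner_self)
  then show "cinner (sl2 U f x) z = cinner x z" by (simp add: cinner_sl2 h cinner_tensor)
qed

lemma conv_eq:
  fixes u :: "'i \<Rightarrow> 'a::real_inner"
  assumes fin: "finite I" and le: "\<And>i. i \<in> I \<Longrightarrow> norm (u i) \<le> norm x"
    and sum: "(\<Sum>i\<in>I. u i) = real (card I) *\<^sub>R x"
  shows "\<And>i. i \<in> I \<Longrightarrow> u i = x"
proof -
  have "(\<Sum>i\<in>I. (norm (u i - x))\<^sup>2) = (\<Sum>i\<in>I. (norm (u i))\<^sup>2 + (norm x)\<^sup>2 - 2 * inner (u i) x)"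
    by (simp add: power2_norm_eq_inner inner_diff_left inner_diff_right inner_commute algebra_simps)
  also have "\<dots> = (\<Sum>i\<in>I. (norm (u i))\<^sup>2) + real (card I) * (norm x)\<^sup>2 - 2 * inner (\<Sum>i\<in>I. u i) x"
    by (simp add: sum.distrib sum_subtractf inner_sum_left sum_distrib_left)
  also have "\<dots> = (\<Sum>i\<in>I. (norm (u i))\<^sup>2) - real (card I) * (norm x)\<^sup>2"
    by (simp add: sum power2_norm_eq_inner)
  also have "\<dots> \<le> 0"
  proof -
    have "(\<Sum>i\<in>I. (norm (u i))\<^sup>2) \<le> (\<Sum>i\<in>I. (norm x)\<^sup>2)"
      by (rule sum_mono) (simp add: le power_mono)
    then show ?thesis by simp
  qed
  finally have "(\<Sum>i\<in>I. (norm (u i - x))\<^sup>2) \<le> 0" .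
  then have "\<forall>i\<in>I. (norm (u i - x))\<^sup>2 = 0"
    using sum_nonneg_eq_0_iff[OF fin, of "\<lambda>i. (norm (u i - x))\<^sup>2"] by (simp add: order_antisym sum_nonneg)
  then show "\<And>i. i \<in> I \<Longrightarrow> u i = x" by simp
qed



lemma sl1_inv:
  assumes mu: "multiplicative_unitary V" and fe: "Rel V f \<eta>" and xe: "Rel V x \<eta>"
  shows "Rel V (sl1 V f x) \<eta>"
  unfolding sl1_rows by (rule Rel_lin_left) (rule Rel_rows[OF mu fe xe])

lemma sl2_inv:
  assumes mu: "multiplicative_unitary V" and ex: "Rel V \<eta> x" and ef: "Rel V \<eta> f"
  shows "Rel V \<eta> (sl2 (adjoint_mat V) f x)"
  unfolding sl2_cols by (rule Rel_lin_right) (rule Rel_cols[OF mu ex ef])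

lemma mid_split:
  fixes P Q :: "complex^('n::finite \<times> 'n \<times> 'n)"
  assumes hP: "\<And>a b d. P $ (a,b,d) = F b $ (a,d)" and hQ: "\<And>a b d. Q $ (a,b,d) = G $ (a,d) * c $ b"
  shows "cinner P Q = (\<Sum>b\<in>UNIV. cnj (c $ b) * cinner (F b) G)"
proof -
  have "cinner P Q = (\<Sum>a\<in>UNIV. \<Sum>b\<in>UNIV. \<Sum>d\<in>UNIV. cnj (c $ b) * (F b $ (a,d) * cnj (G $ (a,d))))"
    unfolding cinner_def by (simp add: sum3 hP hQ mult_ac)
  also have "\<dots> = (\<Sum>b\<in>UNIV. \<Sum>a\<in>UNIV. \<Sum>d\<in>UNIV. cnj (c $ b) * (F b $ (a,d) * cnj (G $ (a,d))))"
    by (rule sum.swap)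
  also have "\<dots> = (\<Sum>b\<in>UNIV. cnj (c $ b) * cinner (F b) G)"
    unfolding cinner_def by (simp add: sum_UNIV_prod sum_distrib_left)
  finally show ?thesis .
qed

lemma sl1_idem:
  assumes mu: "multiplicative_unitary V" and cc: "Rel V c c" and c1: "norm c = 1"
  shows "sl1 V c (sl1 V c y) = sl1 V c y"
proof (rule ext_cinner)
  fix z
  have U: "unitary_mat V" using mu by (rule mu_unitary)
  have cc1: "cinner c c = 1" using c1 by (simp add: cinner_self)
  define W where "W = V *v tensor c y"
  define X where "X = t23 c (tensor c y)"
  define w where "w = t23 c (tensor c z)"
  have h23: "leg23 V *v X = t23 c W" by (simp add: X_def W_def leg23_t23)
  have h12: "leg12 V *v X = X" using cc by (simp add: X_def t12_tensor[symmetric] leg12_t12 Rel_def)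
  have hw: "leg12 V *v w = w" using cc by (simp add: w_def t12_tensor[symmetric] leg12_t12 Rel_def)
  have pent: "leg12 V *v (leg13 V *v t23 c W) = t23 c W"
    using pent_vec[OF mu, of X] h23 h12 by simp
  have "cinner (leg13 V *v t23 c W) w = cinner (leg12 V *v (leg13 V *v t23 c W)) (leg12 V *v w)"
    by (simp add: unitary_cinner[OF unitary_leg12[OF U]])
  also have "\<dots> = cinner (t23 c W) w" by (simp only: pent hw)
  also have "\<dots> = cinner (sl1 V c y) z"
    by (simp add: w_def cinner_t23 cc1 cinner_sl1 W_def)
  finally have e1: "cinner (leg13 V *v t23 c W) w = cinner (sl1 V c y) z" .
  have "cinner (leg13 V *v t23 c W) w = (\<Sum>b\<in>UNIV. cnj (c $ b) * cinner (V *v tensor c (rowv W b)) (tensor c z))"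
  proof (rule mid_split)
    show "\<And>a b d. (leg13 V *v t23 c W) $ (a, b, d) = (V *v tensor c (rowv W b)) $ (a, d)"
      by (rule leg13_t23)
    show "\<And>a b d. w $ (a, b, d) = tensor c z $ (a, d) * c $ b"
      by (simp add: w_def t23_def tensor_def mult_ac)
  qed
  also have "\<dots> = (\<Sum>b\<in>UNIV. cnj (c $ b) * cinner (sl1 V c (rowv W b)) z)"
    by (simp add: cinner_sl1)
  also have "\<dots> = cinner (\<Sum>b\<in>UNIV. cnj (c $ b) *s sl1 V c (rowv W b)) z"
    by (simp add: cinner_sum_left cinner_scale_left)
  also have "\<dots> = cinner (sl1 V c (sl1 V c y)) z"
    by (simp add: sl1_rows[of V c y] W_def sl1_sum sl1_scale)
  finally show "cinner (sl1 V c (sl1 V c y)) z = cinner (sl1 V c y) z" using e1 by simp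
qed

lemma norm_add_sq: "(norm (x + y))\<^sup>2 = (norm x)\<^sup>2 + (norm y)\<^sup>2 + 2 * Re (cinner x y)"
  by (simp add: Re_cinner power2_norm_eq_inner inner_add_left inner_add_right inner_commute)

lemma idem_contr_orth:
  fixes P :: "complex^'n::finite \<Rightarrow> complex^'n"
  assumes add: "\<And>x y. P (x + y) = P x + P y" and sc: "\<And>c x. P (c *s x) = c *s P x"
    and idem: "\<And>x. P (P x) = P x" and contr: "\<And>x. norm (P x) \<le> norm x"
  shows "cinner (P y) (z - P z) = 0"
proof (rule ccontr)
  define u where "u = P y"
  define w where "w = z - P z"
  define a where "a = cinner u w"
  assume "cinner (P y) (z - P z) \<noteq> 0"
  then have a0: "a \<noteq> 0" by (simp add: a_def u_def w_def)
  have diff: "\<And>x y. P (x - y) = P x - P y" by (metis add add_diff_cancel diff_add_cancel)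
  have Pw: "P w = 0" by (simp add: w_def diff idem)
  have Pu: "P u = u" by (simp add: u_def idem)
  define s where "s = 1 / ((norm w)\<^sup>2 + 1)"
  have pw: "(norm w)\<^sup>2 + 1 > 0" by (simp add: add_nonneg_pos)
  have s0: "s > 0" using pw by (simp add: s_def)
  have sw: "s * (norm w)\<^sup>2 < 1" using pw by (simp add: s_def field_simps)
  define t where "t = - (complex_of_real s * a)"
  have "P (u + t *s w) = u" by (simp add: add sc Pw Pu)
  then have le: "norm u \<le> norm (u + t *s w)" by (metis contr)
  have ct: "cinner u (t *s w) = - complex_of_real (s * (cmod a)\<^sup>2)"
  proof -
    have "cinner u (t *s w) = cnj t * a" by (simp add: cinner_scale_right a_def)
    also have "\<dots> = - complex_of_real s * (cnj a * a)" by (simp add: t_def)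
    also have "cnj a * a = complex_of_real ((cmod a)\<^sup>2)" by (simp add: complex_mult_cnj cmod_power2 mult.commute)
    finally show ?thesis by simp
  qed
  have nt: "(norm (t *s w))\<^sup>2 = s\<^sup>2 * (cmod a)\<^sup>2 * (norm w)\<^sup>2"
    by (simp add: norm_scale t_def norm_mult power_mult_distrib abs_of_pos[OF s0])
  have "(norm (u + t *s w))\<^sup>2 = (norm u)\<^sup>2 + (norm (t *s w))\<^sup>2 + 2 * Re (cinner u (t *s w))"
    by (rule norm_add_sq)
  also have "\<dots> = (norm u)\<^sup>2 + s * (cmod a)\<^sup>2 * (s * (norm w)\<^sup>2 - 2)"
    unfolding ct nt by (simp add: power2_eq_square algebra_simps)
  also have "\<dots> < (norm u)\<^sup>2"
  proof -
    have "s * (cmod a)\<^sup>2 > 0" using s0 a0 by simp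
    moreover have "s * (norm w)\<^sup>2 - 2 < 0" using sw by simp
    ultimately show ?thesis by (simp add: mult_pos_neg)
  qed
  finally have "(norm (u + t *s w))\<^sup>2 < (norm u)\<^sup>2" .
  moreover have "(norm u)\<^sup>2 \<le> (norm (u + t *s w))\<^sup>2" using le by (simp add: power_mono)
  ultimately show False by simp
qed

lemma idem_contr_diag:
  fixes P :: "complex^'n::finite \<Rightarrow> complex^'n"
  assumes add: "\<And>x y. P (x + y) = P x + P y" and sc: "\<And>c x. P (c *s x) = c *s P x"
    and idem: "\<And>x. P (P x) = P x" and contr: "\<And>x. norm (P x) \<le> norm x"
  shows "cinner (P b) b = complex_of_real ((norm (P b))\<^sup>2)"
proof -
  have "cinner (P b) b = cinner (P b) (P b) + cinner (P b) (b - P b)"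
    by (simp add: cinner_diff_right)
  also have "cinner (P b) (b - P b) = 0" by (rule idem_contr_orth[OF add sc idem contr])
  finally show ?thesis by (simp add: cinner_self)
qed



lemma tendsto_cinner_left:
  assumes "(f \<longlongrightarrow> l) F" shows "((\<lambda>x. cinner (f x) y) \<longlongrightarrow> cinner l y) F"
  unfolding cinner_def by (intro tendsto_intros assms)

lemma cinner_scaleR_left: "cinner (r *\<^sub>R x) y = complex_of_real r * cinner x y"
  by (simp add: scaleR_vs cinner_scale_left)

lemma cesaro:
  fixes T :: "complex^'n::finite \<Rightarrow> complex^'n"
  assumes lin: "linear T" and contr: "\<And>x. norm (T x) \<le> norm x"
    and sub: "subspace L" and cl: "closed L" and inv: "\<And>x. x \<in> L \<Longrightarrow> T x \<in> L"
    and s: "s \<in> L"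
  shows "\<exists>s0\<in>L. T s0 = s0 \<and> (\<forall>y. (\<forall>x. cinner (T x) y = cinner x y) \<longrightarrow> cinner s0 y = cinner s y)"
proof -
  have bl: "bounded_linear T" using lin by (simp add: linear_conv_bounded_linear)
  define a where "a N = (1 / real (Suc N)) *\<^sub>R (\<Sum>k\<le>N. (T^^k) s)" for N
  have pow_norm: "norm ((T^^k) s) \<le> norm s" for k
    by (induction k) (auto intro: order_trans[OF contr])
  have pow_L: "(T^^k) s \<in> L" for k
    by (induction k) (auto simp: s inv)
  have aL: "a N \<in> L" for N
    unfolding a_def by (intro subspace_scale[OF sub] subspace_sum[OF sub] pow_L)
  have anorm: "norm (a N) \<le> norm s" for N
  proof -
    have "norm (\<Sum>k\<le>N. (T^^k) s) \<le> (\<Sum>k\<le>N. norm ((T^^k) s))" by (rule norm_sum)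
    also have "\<dots> \<le> (\<Sum>k\<le>N. norm s)" by (rule sum_mono) (rule pow_norm)
    also have "\<dots> = real (Suc N) * norm s" by simp
    finally have "norm (\<Sum>k\<le>N. (T^^k) s) \<le> real (Suc N) * norm s" .
    then show ?thesis unfolding a_def by (simp add: field_simps)
  qed
  have Tsum: "T (\<Sum>k\<le>N. (T^^k) s) = (\<Sum>k\<le>N. (T^^Suc k) s)" for N
    by (simp add: linear_sum[OF lin])
  have tele: "(\<Sum>k\<le>N. (T^^Suc k) s) - (\<Sum>k\<le>N. (T^^k) s) = (T^^Suc N) s - s" for N
    by (induction N) (auto simp: algebra_simps)
  have diff: "T (a N) - a N = (1 / real (Suc N)) *\<^sub>R ((T^^Suc N) s - s)" for N
  proof -
    have "T (a N) = (1 / real (Suc N)) *\<^sub>R (\<Sum>k\<le>N. (T^^Suc k) s)"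
      unfolding a_def by (simp only: linear_scale[OF lin] Tsum)
    then have "T (a N) - a N = (1 / real (Suc N)) *\<^sub>R ((\<Sum>k\<le>N. (T^^Suc k) s) - (\<Sum>k\<le>N. (T^^k) s))"
      unfolding a_def by (simp only: scaleR_diff_right)
    then show ?thesis by (simp only: tele)
  qed
  have diff0: "(\<lambda>N. T (a N) - a N) \<longlonglongrightarrow> 0"
  proof -
    have "norm (T (a N) - a N) \<le> 2 * norm s / real (Suc N)" for N
    proof -
      have "norm ((T^^Suc N) s - s) \<le> norm ((T^^Suc N) s) + norm s" by (rule norm_triangle_ineq4)
      also have "\<dots> \<le> 2 * norm s" using pow_norm[of "Suc N"] by simp
      finally have h: "norm ((T^^Suc N) s - s) \<le> 2 * norm s" .
      have "norm (T (a N) - a N) = norm ((T^^Suc N) s - s) / real (Suc N)"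
        by (simp only: diff norm_scaleR) simp
      also have "\<dots> \<le> 2 * norm s / real (Suc N)" by (rule divide_right_mono[OF h]) simp
      finally show ?thesis .
    qed
    moreover have "(\<lambda>N. 2 * norm s / real (Suc N)) \<longlonglongrightarrow> 0"
      using tendsto_mult_left_zero[OF LIMSEQ_inverse_real_of_nat, of "2 * norm s"]
      by (simp add: divide_inverse mult.commute)
    ultimately show ?thesis
      by (intro Lim_null_comparison[of "\<lambda>N. T (a N) - a N" "\<lambda>N. 2 * norm s / real (Suc N)"]) (simp_all add: always_eventually)
  qed
  have "\<forall>n. a n \<in> cball 0 (norm s)" using anorm by simp
  then obtain l r where l: "l \<in> cball 0 (norm s)" and r: "strict_mono r" and lim: "(a \<circ> r) \<longlonglongrightarrow> l"
    using seq_compactE[OF compact_imp_seq_compact[OF compact_cball]] by metis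
  have lL: "l \<in> L" using cl lim aL unfolding closed_sequential_limits by (metis comp_apply)
  have "(\<lambda>k. T ((a \<circ> r) k) - (a \<circ> r) k) \<longlonglongrightarrow> T l - l"
    by (intro tendsto_diff bounded_linear.tendsto[OF bl] lim)
  moreover have "(\<lambda>k. T ((a \<circ> r) k) - (a \<circ> r) k) \<longlonglongrightarrow> 0"
    using LIMSEQ_subseq_LIMSEQ[OF diff0 r] by (simp add: comp_def)
  ultimately have "T l - l = 0" by (rule LIMSEQ_unique)
  then have Tl: "T l = l" by simp
  have cin: "cinner l y = cinner s y" if adj: "\<forall>x. cinner (T x) y = cinner x y" for y
  proof -
    have pk: "cinner ((T^^k) s) y = cinner s y" for k
      by (induction k) (simp_all add: adj)
    have "cinner (a N) y = cinner s y" for N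
    proof -
      have nz: "(1::complex) + of_nat N \<noteq> 0" by (metis of_nat_Suc of_nat_eq_0_iff nat.simps(3))
      show ?thesis unfolding a_def cinner_scaleR_left cinner_sum_left pk using nz by simp
    qed
    then have "(\<lambda>k. cinner ((a \<circ> r) k) y) = (\<lambda>k. cinner s y)" by simp
    moreover have "(\<lambda>k. cinner ((a \<circ> r) k) y) \<longlonglongrightarrow> cinner l y"
      by (rule tendsto_cinner_left[OF lim])
    ultimately show ?thesis by (simp add: LIMSEQ_const_iff)
  qed
  show ?thesis using lL Tl cin by blast
qed



lemma e1213: "(leg12 V ** leg13 V) $ (i,k,l) $ (j,k',l') = (\<Sum>m\<in>UNIV. V $ (i,k) $ (m,k') * V $ (m,l) $ (j,l'))"
  unfolding matrix_matrix_mult_def leg12_def leg13_def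
  by (simp add: sum_UNIV_prod sum_distrib_left sum_distrib_right ifsimps mult_ac)

lemma e1323: "(leg13 V ** leg23 V) $ (k,l,i) $ (k',l',j) = (\<Sum>m\<in>UNIV. V $ (k,i) $ (k',m) * V $ (l,m) $ (l',j))"
  unfolding matrix_matrix_mult_def leg13_def leg23_def
  by (simp add: sum_UNIV_prod sum_distrib_left sum_distrib_right ifsimps mult_ac)

lemma pent2:
  assumes mu: "multiplicative_unitary V"
  shows "leg12 V ** leg13 V = leg23 V ** leg12 V ** leg23 (adjoint_mat V)"
proof -
  have U: "unitary_mat V" using mu by (rule mu_unitary)
  have P: "leg12 V ** leg13 V ** leg23 V = leg23 V ** leg12 V"
    using mu by (simp add: multiplicative_unitary_def)
  have I: "leg23 V ** leg23 (adjoint_mat V) = mat 1"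
    using U by (simp add: leg23_mult leg23_one unitary_mat_def)
  have "leg12 V ** leg13 V = leg12 V ** leg13 V ** (leg23 V ** leg23 (adjoint_mat V))"
    by (simp add: I)
  also have "\<dots> = (leg12 V ** leg13 V ** leg23 V) ** leg23 (adjoint_mat V)"
    by (simp add: matrix_mul_assoc)
  finally show ?thesis by (simp add: P)
qed

lemma pent3:
  assumes mu: "multiplicative_unitary V"
  shows "leg13 V ** leg23 V = leg12 (adjoint_mat V) ** leg23 V ** leg12 V"
proof -
  have U: "unitary_mat V" using mu by (rule mu_unitary)
  have P: "leg12 V ** leg13 V ** leg23 V = leg23 V ** leg12 V"
    using mu by (simp add: multiplicative_unitary_def)
  have I: "leg12 (adjoint_mat V) ** leg12 V = mat 1"
    using U by (simp add: leg12_mult leg12_one unitary_mat_def)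
  have "leg13 V ** leg23 V = (leg12 (adjoint_mat V) ** leg12 V) ** (leg13 V ** leg23 V)"
    by (simp add: I)
  also have "\<dots> = leg12 (adjoint_mat V) ** (leg12 V ** leg13 V ** leg23 V)"
    by (simp add: matrix_mul_assoc)
  finally show ?thesis by (simp add: P matrix_mul_assoc)
qed

lemma cyc23:
  fixes A B :: "complex ^ ('n::finite \<times> 'n) ^ ('n \<times> 'n)" and Y :: "complex ^ ('n \<times> 'n \<times> 'n) ^ ('n \<times> 'n \<times> 'n)"
  shows "(\<Sum>q\<in>UNIV. (leg23 A ** Y ** leg23 B) $ (i,q) $ (j,q))
       = (\<Sum>r\<in>UNIV. \<Sum>s\<in>UNIV. Y $ (i,r) $ (j,s) * (B ** A) $ s $ r)"
proof -
  have "(\<Sum>q\<in>UNIV. (leg23 A ** Y ** leg23 B) $ (i,q) $ (j,q))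
      = (\<Sum>q\<in>UNIV. \<Sum>r\<in>UNIV. \<Sum>s\<in>UNIV. A $ q $ r * Y $ (i,r) $ (j,s) * B $ s $ q)"
    unfolding matrix_matrix_mult_def leg23_def
    apply (simp add: sum_UNIV_prod[where 'a='n and 'b="'n\<times>'n"] sum_distrib_left sum_distrib_right ifsimps mult_ac)
    apply (rule sum.cong[OF refl], rule sum.swap)
    done
  also have "\<dots> = (\<Sum>r\<in>UNIV. \<Sum>q\<in>UNIV. \<Sum>s\<in>UNIV. A $ q $ r * Y $ (i,r) $ (j,s) * B $ s $ q)"
    by (rule sum.swap)
  also have "\<dots> = (\<Sum>r\<in>UNIV. \<Sum>s\<in>UNIV. \<Sum>q\<in>UNIV. A $ q $ r * Y $ (i,r) $ (j,s) * B $ s $ q)"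
    by (rule sum.cong[OF refl], rule sum.swap)
  also have "\<dots> = (\<Sum>r\<in>UNIV. \<Sum>s\<in>UNIV. Y $ (i,r) $ (j,s) * (B ** A) $ s $ r)"
    unfolding matrix_matrix_mult_def by (simp add: sum_distrib_left mult_ac)
  finally show ?thesis .
qed

lemma cyc12:
  fixes A B :: "complex ^ ('n::finite \<times> 'n) ^ ('n \<times> 'n)" and Y :: "complex ^ ('n \<times> 'n \<times> 'n) ^ ('n \<times> 'n \<times> 'n)"
  shows "(\<Sum>q\<in>UNIV. (leg12 A ** Y ** leg12 B) $ (fst q, snd q, i) $ (fst q, snd q, j))
       = (\<Sum>r\<in>UNIV. \<Sum>s\<in>UNIV. Y $ (fst r, snd r, i) $ (fst s, snd s, j) * (B ** A) $ s $ r)"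
proof -
  have sw: "(\<Sum>p\<in>(UNIV::('n\<times>'n\<times>'n) set). g p) = (\<Sum>r\<in>UNIV. \<Sum>c\<in>UNIV. g (fst r, snd r, c))" for g
    by (simp add: sum3 sum_UNIV_prod[where 'a='n and 'b='n])
  have "(\<Sum>q\<in>UNIV. (leg12 A ** Y ** leg12 B) $ (fst q, snd q, i) $ (fst q, snd q, j))
      = (\<Sum>q\<in>UNIV. \<Sum>r\<in>UNIV. \<Sum>s\<in>UNIV. A $ q $ r * Y $ (fst r, snd r, i) $ (fst s, snd s, j) * B $ s $ q)"
    unfolding matrix_matrix_mult_def leg12_def
    apply (simp add: sw sum_distrib_left sum_distrib_right ifsimps mult_ac)
    apply (rule sum.cong[OF refl], rule sum.swap)
    done
  also have "\<dots> = (\<Sum>r\<in>UNIV. \<Sum>q\<in>UNIV. \<Sum>s\<in>UNIV. A $ q $ r * Y $ (fst r, snd r, i) $ (fst s, snd s, j) * B $ s $ q)"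
    by (rule sum.swap)
  also have "\<dots> = (\<Sum>r\<in>UNIV. \<Sum>s\<in>UNIV. \<Sum>q\<in>UNIV. A $ q $ r * Y $ (fst r, snd r, i) $ (fst s, snd s, j) * B $ s $ q)"
    by (rule sum.cong[OF refl], rule sum.swap)
  also have "\<dots> = (\<Sum>r\<in>UNIV. \<Sum>s\<in>UNIV. Y $ (fst r, snd r, i) $ (fst s, snd s, j) * (B ** A) $ s $ r)"
    unfolding matrix_matrix_mult_def by (simp add: sum_distrib_left sum_distrib_right mult_ac)
  finally show ?thesis .
qed

lemma sum_mat1: "(\<Sum>r\<in>UNIV. \<Sum>s\<in>UNIV. g r s * (mat 1 :: complex^'m::finite^'m) $ s $ r) = (\<Sum>r\<in>UNIV. g r r)"
  by (simp add: mat_def ifsimps)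



definition Sh :: "complex ^ ('n::finite \<times> 'n) ^ ('n \<times> 'n) \<Rightarrow> complex^'n^'n" where
  "Sh V = (\<chi> i j. \<Sum>k\<in>UNIV. V $ (i,k) $ (j,k))"
definition Tm :: "complex ^ ('n::finite \<times> 'n) ^ ('n \<times> 'n) \<Rightarrow> complex^'n^'n" where
  "Tm V = (\<chi> i j. \<Sum>k\<in>UNIV. V $ (k,i) $ (k,j))"

lemma cnj_if10: "cnj (if P then 1 else 0) = (if P then 1 else (0::complex))" by simp

lemma Sh_sq:
  fixes V :: "complex ^ ('n::finite \<times> 'n) ^ ('n \<times> 'n)"
  assumes mu: "multiplicative_unitary V"
  shows "(Sh V ** Sh V) $ i $ j = of_nat CARD('n) * Sh V $ i $ j"
proof -
  have U: "unitary_mat V" using mu by (rule mu_unitary)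
  have "(Sh V ** Sh V) $ i $ j = (\<Sum>m\<in>UNIV. \<Sum>k\<in>UNIV. \<Sum>l\<in>UNIV. V $ (i,k) $ (m,k) * V $ (m,l) $ (j,l))"
    unfolding Sh_def matrix_matrix_mult_def by (simp add: sum_product)
  also have "\<dots> = (\<Sum>k\<in>UNIV. \<Sum>m\<in>UNIV. \<Sum>l\<in>UNIV. V $ (i,k) $ (m,k) * V $ (m,l) $ (j,l))"
    by (rule sum.swap)
  also have "\<dots> = (\<Sum>k\<in>UNIV. \<Sum>l\<in>UNIV. \<Sum>m\<in>UNIV. V $ (i,k) $ (m,k) * V $ (m,l) $ (j,l))"
    by (rule sum.cong[OF refl], rule sum.swap)
  also have "\<dots> = (\<Sum>q\<in>UNIV. (leg12 V ** leg13 V) $ (i,q) $ (j,q))"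
    by (simp add: sum_UNIV_prod e1213)
  also have "\<dots> = (\<Sum>q\<in>UNIV. (leg23 V ** leg12 V ** leg23 (adjoint_mat V)) $ (i,q) $ (j,q))"
    by (simp only: pent2[OF mu])
  also have "\<dots> = (\<Sum>r\<in>UNIV. \<Sum>s\<in>UNIV. leg12 V $ (i,r) $ (j,s) * (adjoint_mat V ** V) $ s $ r)"
    by (rule cyc23)
  also have "\<dots> = (\<Sum>r\<in>UNIV. leg12 V $ (i,r) $ (j,r))"
    using U by (simp add: unitary_mat_def sum_mat1)
  also have "\<dots> = of_nat CARD('n) * Sh V $ i $ j"
    by (simp add: sum_UNIV_prod leg12_def Sh_def sum_distrib_left)
  finally show ?thesis .
qed

lemma Tm_sq:
  fixes V :: "complex ^ ('n::finite \<times> 'n) ^ ('n \<times> 'n)"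
  assumes mu: "multiplicative_unitary V"
  shows "(Tm V ** Tm V) $ i $ j = of_nat CARD('n) * Tm V $ i $ j"
proof -
  have U: "unitary_mat V" using mu by (rule mu_unitary)
  have "(Tm V ** Tm V) $ i $ j = (\<Sum>m\<in>UNIV. \<Sum>k\<in>UNIV. \<Sum>l\<in>UNIV. V $ (k,i) $ (k,m) * V $ (l,m) $ (l,j))"
    unfolding Tm_def matrix_matrix_mult_def by (simp add: sum_product)
  also have "\<dots> = (\<Sum>k\<in>UNIV. \<Sum>m\<in>UNIV. \<Sum>l\<in>UNIV. V $ (k,i) $ (k,m) * V $ (l,m) $ (l,j))"
    by (rule sum.swap)
  also have "\<dots> = (\<Sum>k\<in>UNIV. \<Sum>l\<in>UNIV. \<Sum>m\<in>UNIV. V $ (k,i) $ (k,m) * V $ (l,m) $ (l,j))"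
    by (rule sum.cong[OF refl], rule sum.swap)
  also have "\<dots> = (\<Sum>q\<in>UNIV. (leg13 V ** leg23 V) $ (fst q, snd q, i) $ (fst q, snd q, j))"
    by (simp add: sum_UNIV_prod e1323)
  also have "\<dots> = (\<Sum>q\<in>UNIV. (leg12 (adjoint_mat V) ** leg23 V ** leg12 V) $ (fst q, snd q, i) $ (fst q, snd q, j))"
    by (simp only: pent3[OF mu])
  also have "\<dots> = (\<Sum>r\<in>UNIV. \<Sum>s\<in>UNIV. leg23 V $ (fst r, snd r, i) $ (fst s, snd s, j) * (V ** adjoint_mat V) $ s $ r)"
    by (rule cyc12)
  also have "\<dots> = (\<Sum>r\<in>UNIV. leg23 V $ (fst r, snd r, i) $ (fst r, snd r, j))"
    using U by (simp add: unitary_mat_def sum_mat1)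
  also have "\<dots> = of_nat CARD('n) * Tm V $ i $ j"
    by (simp add: sum_UNIV_prod leg23_def Tm_def)
  finally show ?thesis .
qed

lemma trace_eq: "(\<Sum>i\<in>UNIV. Sh V $ i $ i) = (\<Sum>i\<in>UNIV. Tm V $ i $ i)"
  unfolding Sh_def Tm_def by (simp add: sum.swap[of "\<lambda>i k. V $ (i,k) $ (i,k)"])

lemma Sh_sl2: "Sh V *v x = (\<Sum>k\<in>UNIV. sl2 V (axis k 1) x)"
proof -
  have "(Sh V *v x) $ i = (\<Sum>k\<in>UNIV. sl2 V (axis k 1) x) $ i" for i
  proof -
    have "(Sh V *v x) $ i = (\<Sum>a\<in>UNIV. \<Sum>k\<in>UNIV. V $ (i,k) $ (a,k) * x $ a)"
      unfolding Sh_def matrix_vector_mult_def by (simp add: sum_distrib_right)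
    also have "\<dots> = (\<Sum>k\<in>UNIV. \<Sum>a\<in>UNIV. V $ (i,k) $ (a,k) * x $ a)" by (rule sum.swap)
    also have "\<dots> = (\<Sum>k\<in>UNIV. sl2 V (axis k 1) x) $ i"
      unfolding sl2_def matrix_vector_mult_def tensor_def axis_def
      by (simp add: sum_component sum_UNIV_prod cnj_if10 ifsimps mult_ac)
    finally show ?thesis .
  qed
  then show ?thesis by (simp add: vec_eq_iff)
qed

lemma Tm_sl1: "Tm V *v x = (\<Sum>k\<in>UNIV. sl1 V (axis k 1) x)"
proof -
  have "(Tm V *v x) $ j = (\<Sum>k\<in>UNIV. sl1 V (axis k 1) x) $ j" for j
  proof -
    have "(Tm V *v x) $ j = (\<Sum>b\<in>UNIV. \<Sum>k\<in>UNIV. V $ (k,j) $ (k,b) * x $ b)"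
      unfolding Tm_def matrix_vector_mult_def by (simp add: sum_distrib_right)
    also have "\<dots> = (\<Sum>k\<in>UNIV. \<Sum>b\<in>UNIV. V $ (k,j) $ (k,b) * x $ b)" by (rule sum.swap)
    also have "\<dots> = (\<Sum>k\<in>UNIV. sl1 V (axis k 1) x) $ j"
      unfolding sl1_def matrix_vector_mult_def tensor_def axis_def
      by (simp add: sum_component sum_UNIV_prod cnj_if10 ifsimps mult_ac)
    finally show ?thesis .
  qed
  then show ?thesis by (simp add: vec_eq_iff)
qed

lemma norm_axis1: "norm (axis k (1::complex)) = 1"
proof -
  have "(norm (axis k (1::complex)))\<^sup>2 = 1" by (simp add: norm_sq_Re cinner_axis_right)
  then show ?thesis by (simp add: power2_eq_1_iff)
qed



lemma mat_scaled_mv: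
  assumes "\<And>i j. M $ i $ j = c * N $ i $ j"
  shows "M *v x = c *s (N *v (x::complex^'n::finite))"
  using assms by (simp add: vec_eq_iff matrix_vector_mult_def sum_distrib_left mult_ac)

lemma real_nat_scale: "real n *\<^sub>R (y::complex^'n::finite) = of_nat n *s y"
  by (simp add: scaleR_vs)

lemma Rel_all_right:
  assumes "\<And>k. Rel V y (axis k 1)" shows "Rel V y \<eta>"
proof -
  have "Rel V y (\<Sum>k\<in>UNIV. (\<eta> $ k) *s axis k 1)" by (rule Rel_lin_right) (rule assms)
  then show ?thesis by (simp only: basis_expand)
qed

lemma Rel_all_left:
  assumes "\<And>k. Rel V (axis k 1) y" shows "Rel V \<eta> y"
proof -
  have "Rel V (\<Sum>k\<in>UNIV. (\<eta> $ k) *s axis k 1) y" by (rule Rel_lin_left) (rule assms)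
  then show ?thesis by (simp only: basis_expand)
qed

lemma Sh_formula:
  fixes V :: "complex ^ ('n::finite \<times> 'n) ^ ('n \<times> 'n)"
  assumes mu: "multiplicative_unitary V" and m1: "multiplicity_one V"
    and fe: "fixed_vec V e" and ne: "norm e = 1"
  shows "Sh V *v x = (of_nat CARD('n) * cinner x e) *s e"
proof -
  have U: "unitary_mat V" using mu by (rule mu_unitary)
  define y where "y = Sh V *v x"
  have "Sh V *v y = (Sh V ** Sh V) *v x" by (simp add: y_def matrix_vector_mul_assoc)
  also have "\<dots> = of_nat CARD('n) *s y"
    unfolding y_def by (rule mat_scaled_mv) (rule Sh_sq[OF mu])
  finally have sumeq: "(\<Sum>k\<in>UNIV. sl2 V (axis k 1) y) = real (card (UNIV::'n set)) *\<^sub>R y"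
    by (simp add: Sh_sl2 real_nat_scale)
  have sl: "sl2 V (axis k 1) y = y" for k
    using conv_eq[of "UNIV::'n set" "\<lambda>k. sl2 V (axis k 1) y" y] sumeq sl2_contract[OF U norm_axis1] by simp
  have "Rel V y (axis k 1)" for k
    unfolding Rel_def by (rule sl2_fix[OF U norm_axis1 sl])
  then have fy: "fixed_vec V y" unfolding fixed_vec_def using Rel_all_right Rel_def by metis
  obtain \<xi> where \<xi>0: "\<xi> \<noteq> 0" and all: "\<And>\<zeta>. fixed_vec V \<zeta> \<Longrightarrow> \<exists>c::complex. \<zeta> = c *s \<xi>"
    using m1 unfolding multiplicity_one_def by blast
  obtain a where ya: "y = a *s \<xi>" using all[OF fy] by blast
  obtain b where eb: "e = b *s \<xi>" using all[OF fe] by blast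
  have b0: "b \<noteq> 0" using ne eb by auto
  have ye: "y = (a / b) *s e" using b0 by (simp add: ya eb vs_mult)
  have ee: "cinner e e = 1" using ne by (simp add: cinner_self)
  have "cinner y e = (\<Sum>k\<in>UNIV. cinner (sl2 V (axis k 1) x) e)"
    by (simp add: y_def Sh_sl2 cinner_sum_left)
  also have "\<dots> = (\<Sum>k\<in>UNIV. cinner (V *v tensor x (axis k 1)) (V *v tensor e (axis k 1)))"
    using fe by (simp add: cinner_sl2 fixed_vec_def)
  also have "\<dots> = (\<Sum>k\<in>(UNIV::'n set). cinner x e)"
  proof -
    have ak: "cinner (axis k 1) (axis k (1::complex)) = 1" for k :: 'n
      by (simp only: cinner_axis_right) (simp add: axis_def)
    show ?thesis by (simp add: unitary_cinner[OF U] cinner_tensor ak)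
  qed
  also have "\<dots> = of_nat CARD('n) * cinner x e" by simp
  finally have "cinner y e = of_nat CARD('n) * cinner x e" .
  moreover have "cinner y e = a / b" using ee by (simp add: ye cinner_scale_left)
  ultimately show ?thesis using ye y_def by simp
qed



lemma mv_axis_diag: "(M *v axis i (1::complex)) $ i = M $ i $ i"
  by (simp add: matrix_vector_mult_def axis_def ifsimps)

lemma cofixed_exists:
  fixes V :: "complex ^ ('n::finite \<times> 'n) ^ ('n \<times> 'n)"
  assumes mu: "multiplicative_unitary V" and m1: "multiplicity_one V"
    and fe: "fixed_vec V e" and ne: "norm e = 1"
  shows "\<exists>c. norm c = 1 \<and> (\<forall>x. Rel V x c) \<and> cinner c e \<noteq> 0"
proof -
  have U: "unitary_mat V" using mu by (rule mu_unitary)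
  have ee: "cinner e e = 1" using ne by (simp add: cinner_self)
  have "(\<Sum>i\<in>UNIV. Sh V $ i $ i) = (\<Sum>i\<in>UNIV. of_nat CARD('n) * (cnj (e $ i) * e $ i))"
  proof (rule sum.cong[OF refl])
    fix i
    have "Sh V $ i $ i = (Sh V *v axis i 1) $ i" by (simp add: mv_axis_diag)
    also have "\<dots> = of_nat CARD('n) * (cnj (e $ i) * e $ i)"
      by (simp add: Sh_formula[OF mu m1 fe ne] cinner_axis_left)
    finally show "Sh V $ i $ i = of_nat CARD('n) * (cnj (e $ i) * e $ i)" .
  qed
  also have "\<dots> = of_nat CARD('n) * cinner e e"
    by (simp add: sum_distrib_left cinner_def mult_ac)
  finally have trS: "(\<Sum>i\<in>UNIV. Sh V $ i $ i) = of_nat CARD('n)" using ee by simp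
  then have trT: "(\<Sum>i\<in>UNIV. Tm V $ i $ i) \<noteq> 0" by (simp add: trace_eq)
  then obtain i where ti: "Tm V $ i $ i \<noteq> 0" by (meson sum.neutral)
  define c0 where "c0 = Tm V *v axis i 1"
  have c00: "c0 \<noteq> 0" using ti by (metis c0_def mv_axis_diag zero_index)
  have "Tm V *v c0 = (Tm V ** Tm V) *v axis i 1" by (simp add: c0_def matrix_vector_mul_assoc)
  also have "\<dots> = of_nat CARD('n) *s c0"
    unfolding c0_def by (rule mat_scaled_mv) (rule Tm_sq[OF mu])
  finally have sumeq: "(\<Sum>k\<in>UNIV. sl1 V (axis k 1) c0) = real (card (UNIV::'n set)) *\<^sub>R c0"
    by (simp add: Tm_sl1 real_nat_scale)
  have sl: "sl1 V (axis k 1) c0 = c0" for k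
    using conv_eq[of "UNIV::'n set" "\<lambda>k. sl1 V (axis k 1) c0" c0] sumeq sl1_contract[OF U norm_axis1] by simp
  have "Rel V (axis k 1) c0" for k
    unfolding Rel_def by (rule sl1_fix[OF U norm_axis1 sl])
  then have cof0: "Rel V x c0" for x by (rule Rel_all_left)
  define c where "c = complex_of_real (1 / norm c0) *s c0"
  have nc: "norm c = 1" using c00 by (simp add: c_def norm_scale norm_divide)
  have cof: "Rel V x c" for x unfolding c_def by (rule Rel_scale_right[OF cof0])
  have c0': "c \<noteq> 0" using nc by auto
  have cne: "cinner c e \<noteq> 0"
  proof
    assume ce: "cinner c e = 0"
    let ?A = "sl1 V c"
    have cc: "Rel V c c" by (rule cof)
    have diag: "cinner (?A (axis k 1)) (axis k 1) = complex_of_real ((norm (?A (axis k 1)))\<^sup>2)" for k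
      by (rule idem_contr_diag) (simp_all add: sl1_add sl1_scale sl1_idem[OF mu cc nc] sl1_contract[OF U nc])
    have "(\<Sum>k\<in>UNIV. cinner (?A (axis k 1)) (axis k 1)) = (\<Sum>k\<in>UNIV. cinner (sl2 V (axis k 1) c) c)"
      by (simp add: cinner_sl1 cinner_sl2)
    also have "\<dots> = cinner (Sh V *v c) c" by (simp add: Sh_sl2 cinner_sum_left)
    also have "\<dots> = 0" by (simp add: Sh_formula[OF mu m1 fe ne] cinner_scale_left ce)
    finally have "(\<Sum>k\<in>UNIV. complex_of_real ((norm (?A (axis k 1)))\<^sup>2)) = 0"
      by (simp only: diag)
    then have "complex_of_real (\<Sum>k\<in>UNIV. (norm (?A (axis k 1)))\<^sup>2) = 0"
      by (simp only: of_real_sum)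
    then have "(\<Sum>k\<in>UNIV. (norm (?A (axis k 1)))\<^sup>2) = 0" by (simp only: of_real_eq_0_iff)
    then have z: "?A (axis k 1) = 0" for k
      using sum_nonneg_eq_0_iff[of UNIV "\<lambda>k. (norm (?A (axis k 1)))\<^sup>2"] by simp
    have "?A c = ?A (\<Sum>k\<in>UNIV. (c $ k) *s axis k 1)" by (simp only: basis_expand)
    also have "\<dots> = 0" by (simp add: sl1_sum sl1_scale z)
    finally have "?A c = 0" .
    moreover have "?A c = c" by (rule sl1_of_fix[OF nc]) (use cc in \<open>simp add: Rel_def\<close>)
    ultimately show False using c0' by simp
  qed
  show ?thesis using nc cof cne by blast
qed



lemma linear_tensor_left: "linear (\<lambda>x. V *v tensor x \<eta> - tensor x \<eta>)"
  by (rule linearI) (simp_all add: tensor_add_left mv_add scaleR_vs tensor_scale_left mv_scale vs_add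
      vec_eq_iff algebra_simps)
lemma linear_tensor_right: "linear (\<lambda>x. V *v tensor \<eta> x - tensor \<eta> x)"
  by (rule linearI) (simp_all add: tensor_add_right mv_add scaleR_vs tensor_scale_right mv_scale vs_add
      vec_eq_iff algebra_simps)

lemma closed_Rel_left: "closed {x. \<forall>\<eta>\<in>K. Rel V x \<eta>}"
proof -
  have "{x. \<forall>\<eta>\<in>K. Rel V x \<eta>} = (\<Inter>\<eta>\<in>K. {x. V *v tensor x \<eta> - tensor x \<eta> = 0})"
    by (auto simp: Rel_def)
  moreover have "closed {x. V *v tensor x \<eta> - tensor x \<eta> = 0}" for \<eta>
    by (rule closed_Collect_eq) (simp_all add: linear_continuous_on linear_conv_bounded_linear[symmetric] linear_tensor_left)
  ultimately show ?thesis by (simp add: closed_INT)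
qed

lemma closed_Rel_right: "closed {x. \<forall>\<eta>\<in>K. Rel V \<eta> x}"
proof -
  have "{x. \<forall>\<eta>\<in>K. Rel V \<eta> x} = (\<Inter>\<eta>\<in>K. {x. V *v tensor \<eta> x - tensor \<eta> x = 0})"
    by (auto simp: Rel_def)
  moreover have "closed {x. V *v tensor \<eta> x - tensor \<eta> x = 0}" for \<eta>
    by (rule closed_Collect_eq) (simp_all add: linear_continuous_on linear_conv_bounded_linear[symmetric] linear_tensor_right)
  ultimately show ?thesis by (simp add: closed_INT)
qed

lemma Rel_zero_left: "Rel V 0 \<eta>" by (simp add: Rel_def)
lemma Rel_zero_right: "Rel V \<eta> 0" by (simp add: Rel_def)

lemma subspace_Rel_left: "subspace {x. \<forall>\<eta>\<in>K. Rel V x \<eta>}"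
  unfolding subspace_def by (simp add: Rel_zero_left Rel_add_left scaleR_vs Rel_scale_left)
lemma subspace_Rel_right: "subspace {x. \<forall>\<eta>\<in>K. Rel V \<eta> x}"
  unfolding subspace_def by (simp add: Rel_zero_right Rel_add_right scaleR_vs Rel_scale_right)

lemma conv2:
  fixes a b x :: "'a::real_inner"
  assumes "a + b = 2 *\<^sub>R x" "norm a \<le> norm x" "norm b \<le> norm x"
  shows "a = x" "b = x"
proof -
  have s: "(\<Sum>i\<in>(UNIV::bool set). (if i then a else b)) = real (card (UNIV::bool set)) *\<^sub>R x"
    using assms(1) by (simp add: UNIV_bool add.commute)
  have "\<And>i. i \<in> (UNIV::bool set) \<Longrightarrow> (if i then a else b) = x"
    by (rule conv_eq[OF _ _ s]) (use assms in auto)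
  from this[of True] this[of False] show "a = x" "b = x" by auto
qed

lemma normalize_vec:
  fixes s :: "complex^'n::finite"
  assumes "s \<noteq> 0"
  shows "norm (complex_of_real (1 / norm s) *s s) = 1"
  using assms by (simp add: norm_scale norm_divide)



lemma sl1_scaleR: "sl1 U f (r *\<^sub>R x) = r *\<^sub>R sl1 U f x"
  by (simp add: scaleR_vs sl1_scale)
lemma sl2_scaleR: "sl2 U f (r *\<^sub>R x) = r *\<^sub>R sl2 U f x"
  by (simp add: scaleR_vs sl2_scale)

lemma half_eq: "(1/2::real) *\<^sub>R (a + b) = (x::'a::real_vector) \<Longrightarrow> a + b = 2 *\<^sub>R x"
  by (metis scaleR_scaleR field_sum_of_halves mult_2 scaleR_one scaleR_left_distrib)

lemma pre_sub_facts:
  assumes "pre_subgroup V e f"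
  shows "norm f = 1" "Rel V f f" "cinner f e = complex_of_real (Re (cinner f e))" "Re (cinner f e) > 0"
  using assms by (auto simp: pre_subgroup_def Rel_def complex_eq_iff)

lemma upper_meet:
  fixes V :: "complex ^ ('n::finite \<times> 'n) ^ ('n \<times> 'n)"
  assumes mu: "multiplicative_unitary V" and m1: "multiplicity_one V"
    and fe: "fixed_vec V e" and ne: "norm e = 1"
    and pf: "pre_subgroup V e f" and pf': "pre_subgroup V e f'"
  shows "\<exists>g. pre_subgroup V e g \<and> Hup V f \<inter> Hup V f' = Hup V g \<and> prec V g f \<and> prec V g f' \<and>
           (\<forall>h. pre_subgroup V e h \<and> prec V h f \<and> prec V h f' \<longrightarrow> prec V h g)"
proof -
  have U: "unitary_mat V" using mu by (rule mu_unitary)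
  note f = pre_sub_facts[OF pf] and f' = pre_sub_facts[OF pf']
  obtain c where nc: "norm c = 1" and cof: "\<And>x. Rel V x c" and ce: "cinner c e \<noteq> 0"
    using cofixed_exists[OF mu m1 fe ne] by blast
  define K where "K = {\<eta>. Rel V f \<eta> \<and> Rel V f' \<eta>}"
  define L where "L = {x. \<forall>\<eta>\<in>K. Rel V x \<eta>}"
  define T where "T x = (1/2::real) *\<^sub>R (sl1 V f x + sl1 V f' x)" for x
  have lin: "linear T"
    by (rule linearI) (simp_all add: T_def sl1_add sl1_scaleR algebra_simps)
  have contr: "norm (T x) \<le> norm x" for x
  proof -
    have "norm (T x) \<le> (1/2) * (norm (sl1 V f x) + norm (sl1 V f' x))"
      unfolding T_def by (simp add: norm_triangle_ineq)
    also have "\<dots> \<le> (1/2) * (norm x + norm x)"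
      using sl1_contract[OF U f(1)] sl1_contract[OF U f'(1)] by (intro mult_left_mono add_mono) auto
    finally show ?thesis by simp
  qed
  have sub: "subspace L" unfolding L_def by (rule subspace_Rel_left)
  have cl: "closed L" unfolding L_def by (rule closed_Rel_left)
  have inv: "T x \<in> L" if "x \<in> L" for x
  proof -
    have "Rel V (T x) \<eta>" if "\<eta> \<in> K" for \<eta>
    proof -
      have a: "Rel V (sl1 V f x) \<eta>" using sl1_inv[OF mu] \<open>\<eta> \<in> K\<close> \<open>x \<in> L\<close> by (simp add: K_def L_def)
      have b: "Rel V (sl1 V f' x) \<eta>" using sl1_inv[OF mu] \<open>\<eta> \<in> K\<close> \<open>x \<in> L\<close> by (simp add: K_def L_def)
      show ?thesis unfolding T_def scaleR_vs by (intro Rel_scale_left Rel_add_left a b)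
    qed
    then show ?thesis by (simp add: L_def)
  qed
  have eL: "e \<in> L" using fe by (simp add: L_def Rel_def fixed_vec_def)
  obtain s0 where s0L: "s0 \<in> L" and Ts0: "T s0 = s0"
    and adj: "\<And>y. (\<forall>x. cinner (T x) y = cinner x y) \<Longrightarrow> cinner s0 y = cinner e y"
    using cesaro[OF lin contr sub cl inv eL] by blast
  have "sl1 V f s0 + sl1 V f' s0 = 2 *\<^sub>R s0" using Ts0 by (intro half_eq) (simp add: T_def)
  then have "sl1 V f s0 = s0" "sl1 V f' s0 = s0"
    using conv2 sl1_contract[OF U f(1)] sl1_contract[OF U f'(1)] by blast+
  then have s0K: "s0 \<in> K" unfolding K_def Rel_def using sl1_fix[OF U f(1)] sl1_fix[OF U f'(1)] by blast
  have adjK: "\<forall>x. cinner (T x) y = cinner x y" if "y \<in> K" for y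
  proof
    fix x
    have ff: "cinner f f = 1" "cinner f' f' = 1" using f(1) f'(1) by (simp_all add: cinner_self)
    have "cinner (sl1 V f x) y = cinner x y"
    proof -
      have "cinner (sl1 V f x) y = cinner (V *v tensor f x) (V *v tensor f y)"
        using that by (simp add: cinner_sl1 K_def Rel_def)
      then show ?thesis by (simp add: unitary_cinner[OF U] cinner_tensor ff)
    qed
    moreover have "cinner (sl1 V f' x) y = cinner x y"
    proof -
      have "cinner (sl1 V f' x) y = cinner (V *v tensor f' x) (V *v tensor f' y)"
        using that by (simp add: cinner_sl1 K_def Rel_def)
      then show ?thesis by (simp add: unitary_cinner[OF U] cinner_tensor ff)
    qed
    ultimately show "cinner (T x) y = cinner x y"
      by (simp add: T_def cinner_scaleR_left cinner_add_left)
  qed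
  have cK: "c \<in> K" using cof by (simp add: K_def)
  have "cinner s0 c = cinner e c" using adj adjK[OF cK] by blast
  then have s00: "s0 \<noteq> 0" using ce by (metis cinner_zero_left cnj_cinner complex_cnj_zero)
  have ss: "cinner s0 s0 = cinner e s0" using adj adjK[OF s0K] by blast
  define g where "g = complex_of_real (1 / norm s0) *s s0"
  have ng: "norm g = 1" unfolding g_def by (rule normalize_vec[OF s00])
  have g0: "g \<noteq> 0" using ng by auto
  have gK: "g \<in> K" using s0K by (simp add: g_def K_def Rel_scale_right)
  have gL: "g \<in> L" using s0L by (simp add: g_def L_def Rel_scale_left)
  have gg: "Rel V g g" using gK gL by (simp add: L_def)
  have ge: "cinner g e = complex_of_real (norm s0)"
  proof -
    have "cinner s0 e = cnj (cinner e s0)" by (simp add: cnj_cinner)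
    also have "\<dots> = complex_of_real ((norm s0)\<^sup>2)" by (simp add: ss[symmetric] cinner_self)
    finally have "cinner s0 e = complex_of_real ((norm s0)\<^sup>2)" .
    then show ?thesis using s00 by (simp add: g_def cinner_scale_left power2_eq_square)
  qed
  have pg: "pre_subgroup V e g"
    using ng ge gg s00 by (simp add: pre_subgroup_def Rel_def)
  have HupR: "Hup V x = {\<eta>. Rel V x \<eta>}" for x by (simp add: Hup_def Rel_def)
  have precR: "prec V a b \<longleftrightarrow> Rel V b a" for a b by (simp add: prec_def Rel_def)
  have eq: "Hup V f \<inter> Hup V f' = Hup V g"
  proof
    show "Hup V f \<inter> Hup V f' \<subseteq> Hup V g" using gL by (auto simp: HupR L_def K_def)
    show "Hup V g \<subseteq> Hup V f \<inter> Hup V f'"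
      using gK Rel_trans[OF mu _ _ g0] by (auto simp: HupR K_def)
  qed
  show ?thesis
    using pg eq gK gL by (auto simp: precR K_def L_def)
qed



lemma lower_meet:
  fixes V :: "complex ^ ('n::finite \<times> 'n) ^ ('n \<times> 'n)"
  assumes mu: "multiplicative_unitary V"
    and fe: "fixed_vec V e"
    and pf: "pre_subgroup V e f" and pf': "pre_subgroup V e f'"
  shows "\<exists>g'. pre_subgroup V e g' \<and> Hlow V f \<inter> Hlow V f' = Hlow V g' \<and> prec V f g' \<and> prec V f' g' \<and>
           (\<forall>h. pre_subgroup V e h \<and> prec V f h \<and> prec V f' h \<longrightarrow> prec V g' h)"
proof -
  have U: "unitary_mat V" using mu by (rule mu_unitary)
  have Ua: "unitary_mat (adjoint_mat V)" using U by (rule unitary_adjoint)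
  note f = pre_sub_facts[OF pf] and f' = pre_sub_facts[OF pf']
  define K where "K = {\<eta>. Rel V \<eta> f \<and> Rel V \<eta> f'}"
  define L where "L = {x. \<forall>\<eta>\<in>K. Rel V \<eta> x}"
  define T where "T x = (1/2::real) *\<^sub>R (sl2 (adjoint_mat V) f x + sl2 (adjoint_mat V) f' x)" for x
  have lin: "linear T"
    by (rule linearI) (simp_all add: T_def sl2_add sl2_scaleR algebra_simps)
  have contr: "norm (T x) \<le> norm x" for x
  proof -
    have "norm (T x) \<le> (1/2) * (norm (sl2 (adjoint_mat V) f x) + norm (sl2 (adjoint_mat V) f' x))"
      unfolding T_def by (simp add: norm_triangle_ineq)
    also have "\<dots> \<le> (1/2) * (norm x + norm x)"
      using sl2_contract[OF Ua f(1)] sl2_contract[OF Ua f'(1)] by (intro mult_left_mono add_mono) auto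
    finally show ?thesis by simp
  qed
  have sub: "subspace L" unfolding L_def by (rule subspace_Rel_right)
  have cl: "closed L" unfolding L_def by (rule closed_Rel_right)
  have inv: "T x \<in> L" if "x \<in> L" for x
  proof -
    have "Rel V \<eta> (T x)" if "\<eta> \<in> K" for \<eta>
    proof -
      have a: "Rel V \<eta> (sl2 (adjoint_mat V) f x)" using sl2_inv[OF mu] \<open>\<eta> \<in> K\<close> \<open>x \<in> L\<close> by (simp add: K_def L_def)
      have b: "Rel V \<eta> (sl2 (adjoint_mat V) f' x)" using sl2_inv[OF mu] \<open>\<eta> \<in> K\<close> \<open>x \<in> L\<close> by (simp add: K_def L_def)
      show ?thesis unfolding T_def scaleR_vs by (intro Rel_scale_right Rel_add_right a b)
    qed
    then show ?thesis by (simp add: L_def)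
  qed
  have fL: "f \<in> L" by (simp add: L_def K_def)
  obtain s0 where s0L: "s0 \<in> L" and Ts0: "T s0 = s0"
    and adj: "\<And>y. (\<forall>x. cinner (T x) y = cinner x y) \<Longrightarrow> cinner s0 y = cinner f y"
    using cesaro[OF lin contr sub cl inv fL] by blast
  have "sl2 (adjoint_mat V) f s0 + sl2 (adjoint_mat V) f' s0 = 2 *\<^sub>R s0" using Ts0 by (intro half_eq) (simp add: T_def)
  then have "sl2 (adjoint_mat V) f s0 = s0" "sl2 (adjoint_mat V) f' s0 = s0"
    using conv2 sl2_contract[OF Ua f(1)] sl2_contract[OF Ua f'(1)] by blast+
  then have "adjoint_mat V *v tensor s0 f = tensor s0 f" "adjoint_mat V *v tensor s0 f' = tensor s0 f'"
    using sl2_fix[OF Ua f(1)] sl2_fix[OF Ua f'(1)] by blast+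
  then have s0K: "s0 \<in> K" unfolding K_def Rel_def using unitary_fix_adj[OF Ua] by simp
  have adjE: "\<forall>x. cinner (T x) e = cinner x e"
  proof
    fix x
    have ff: "cinner f f = 1" "cinner f' f' = 1" using f(1) f'(1) by (simp_all add: cinner_self)
    have fx: "V *v tensor e g = tensor e g" for g using fe by (simp add: fixed_vec_def)
    have "cinner (sl2 (adjoint_mat V) f x) e = cinner x e"
      by (simp add: cinner_sl2 cinner_adjoint fx cinner_tensor ff)
    moreover have "cinner (sl2 (adjoint_mat V) f' x) e = cinner x e"
      by (simp add: cinner_sl2 cinner_adjoint fx cinner_tensor ff)
    ultimately show "cinner (T x) e = cinner x e"
      by (simp add: T_def cinner_scaleR_left cinner_add_left)
  qed
  have s0e: "cinner s0 e = cinner f e" using adj adjE by blast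
  have s00: "s0 \<noteq> 0" using s0e f(4) by auto
  define g where "g = complex_of_real (1 / norm s0) *s s0"
  have ng: "norm g = 1" unfolding g_def by (rule normalize_vec[OF s00])
  have g0: "g \<noteq> 0" using ng by auto
  have gK: "g \<in> K" using s0K by (simp add: g_def K_def Rel_scale_left)
  have gL: "g \<in> L" using s0L by (simp add: g_def L_def Rel_scale_right)
  have gg: "Rel V g g" using gK gL by (simp add: L_def)
  have ge: "cinner g e = complex_of_real (Re (cinner f e) / norm s0)"
    using s0e f(3) by (simp add: g_def cinner_scale_left)
  have pg: "pre_subgroup V e g"
    using ng ge gg s00 f(4) by (simp add: pre_subgroup_def Rel_def)
  have HlowR: "Hlow V x = {\<eta>. Rel V \<eta> x}" for x by (simp add: Hlow_def Rel_def)
  have precR: "prec V a b \<longleftrightarrow> Rel V b a" for a b by (simp add: prec_def Rel_def)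
  have eq: "Hlow V f \<inter> Hlow V f' = Hlow V g"
  proof
    show "Hlow V f \<inter> Hlow V f' \<subseteq> Hlow V g" using gL by (auto simp: HlowR L_def K_def)
    show "Hlow V g \<subseteq> Hlow V f \<inter> Hlow V f'"
      using gK Rel_trans[OF mu _ _ g0] by (auto simp: HlowR K_def)
  qed
  show ?thesis
    using pg eq gK gL by (auto simp: precR K_def L_def)
qed

theorem corollary3p14:
  fixes V :: "complex ^ ('n::finite \<times> 'n) ^ ('n \<times> 'n)" and e f f' :: "complex ^ 'n"
  assumes "multiplicative_unitary V"
    and "multiplicity_one V"
    and "fixed_vec V e" and "norm e = 1"
    and "pre_subgroup V e f" and "pre_subgroup V e f'"
  shows "\<exists>g g'. pre_subgroup V e g \<and> pre_subgroup V e g' \<and>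
           Hup V f \<inter> Hup V f' = Hup V g \<and> Hlow V f \<inter> Hlow V f' = Hlow V g' \<and>
           prec V g f \<and> prec V g f' \<and>
           (\<forall>h. pre_subgroup V e h \<and> prec V h f \<and> prec V h f' \<longrightarrow> prec V h g) \<and>
           prec V f g' \<and> prec V f' g' \<and>
           (\<forall>h. pre_subgroup V e h \<and> prec V f h \<and> prec V f' h \<longrightarrow> prec V g' h)"
proof -
  obtain g where g: "pre_subgroup V e g \<and> Hup V f \<inter> Hup V f' = Hup V g \<and> prec V g f \<and> prec V g f' \<and>
           (\<forall>h. pre_subgroup V e h \<and> prec V h f \<and> prec V h f' \<longrightarrow> prec V h g)"
    using upper_meet[OF assms] by blast
  obtain g' where g': "pre_subgroup V e g' \<and> Hlow V f \<inter> Hlow V f' = Hlow V g' \<and> prec V f g' \<and> prec V f' g' \<and>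
           (\<forall>h. pre_subgroup V e h \<and> prec V f h \<and> prec V f' h \<longrightarrow> prec V g' h)"
    using lower_meet[OF assms(1) assms(3) assms(5) assms(6)] by blast
  show ?thesis using g g' by blast
qed


end
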